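(* Let $v_1,\ldots,v_r\in\mathbb{Z}^n$ with $\sum_i v_i=0$ and $\mathbf{a}\in\mathbb{Z}^r$ be such that $P=\bigcap_i\{x:\langle v_i,x\rangle+a_i\ge0\}$ is compact and each hyperplane $\{\langle v_i,x\rangle+a_i=0\}$ meets $P$. Let $0<c<\frac16$. Then there are constants $d_k>0$ such that, with \[ \rho_k=\frac{1}{d_k}\sum_{x\in B_{k^c}(0)\cap L\cap\frac{\mathbb{Z}^n-km_{\mathbf{a}}}{\sqrt{k}}} e^{-\frac12\sum_{i\in I_{\mathbf{a}}}\frac{\langle v_i,x\rangle^2}{\langle v_i,m_{\mathbf{a}}\rangle+a_i}}\,\delta_x, \] one has $\lim_{k\to\infty}\nu'_k=\lim_{k\to\infty}\rho_k$, in the sense that $\lim_{k\to\infty}\left(\int f\,d\nu'_k-\int f\,d\rho_k\right)=0$ for every bounded continuous $f:\mathbb{R}^n\to\mathbb{R}$.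
   Context: $\delta_x$ is the Dirac probability measure at $x$; $B_{k^c}(0)$ is the ball of radius $k^c$ about $0$; $\frac{\mathbb{Z}^n-km_{\mathbf{a}}}{\sqrt k}=\{(z-km_{\mathbf{a}})/\sqrt{k}: z\in\mathbb{Z}^n\}$. $L$ is the linear span of differences of points of $P$; $I_{\mathbf{a}}$ is the set of $i$ for which $\langle v_i,\cdot\rangle$ is not constant on $P$; $\phi_{\mathbf{a}}(x)=\prod_i(\langle v_i,x\rangle+a_i)^{\langle v_i,x\rangle+a_i}$ on $P$ (with $0^0=1$) and $m_{\mathbf{a}}$ is its unique minimizer on $P$, lying in the relative interior of $P$. $\mathbf{X}_{k\mathbf{a}}$ is the random vector on $kP\cap\mathbb{Z}^n$ with $\mathbb{P}(\mathbf{X}_{k\mathbf{a}}=x)$ proportional to the multinomial coefficient $\binom{k\sum_i a_i}{\langle v_1,x\rangle+ka_1,\ldots,\langle v_r,x\rangle+ka_r}$, and $\nu'_k$ is the distribution of $(\mathbf{X}_{k\mathbf{a}}-km_{\mathbf{a}})/\sqrt{k}$. *)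

theory Defs
  imports "HOL-Analysis.Analysis"
begin

definition vr :: "int ^ 'n::finite \<Rightarrow> real ^ 'n" where
  "vr z = (\<chi> j. real_of_int (z $ j))"

definition polyP :: "nat \<Rightarrow> (nat \<Rightarrow> int ^ 'n::finite) \<Rightarrow> (nat \<Rightarrow> int) \<Rightarrow> (real ^ 'n) set" where
  "polyP r v a = {x. \<forall>i<r. inner (vr (v i)) x + real_of_int (a i) \<ge> 0}"

definition selfpow :: "real \<Rightarrow> real" where
  "selfpow t = (if t = 0 then 1 else t powr t)"

definition phi_a :: "nat \<Rightarrow> (nat \<Rightarrow> int ^ 'n::finite) \<Rightarrow> (nat \<Rightarrow> int) \<Rightarrow> real ^ 'n \<Rightarrow> real" where
  "phi_a r v a x = (\<Prod>i<r. selfpow (inner (vr (v i)) x + real_of_int (a i)))"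

definition m_a :: "nat \<Rightarrow> (nat \<Rightarrow> int ^ 'n::finite) \<Rightarrow> (nat \<Rightarrow> int) \<Rightarrow> real ^ 'n" where
  "m_a r v a = (THE m. m \<in> polyP r v a \<and> (\<forall>x\<in>polyP r v a. phi_a r v a m \<le> phi_a r v a x))"

definition L_a :: "nat \<Rightarrow> (nat \<Rightarrow> int ^ 'n::finite) \<Rightarrow> (nat \<Rightarrow> int) \<Rightarrow> (real ^ 'n) set" where
  "L_a r v a = span {p - q | p q. p \<in> polyP r v a \<and> q \<in> polyP r v a}"

definition I_a :: "nat \<Rightarrow> (nat \<Rightarrow> int ^ 'n::finite) \<Rightarrow> (nat \<Rightarrow> int) \<Rightarrow> nat set" where
  "I_a r v a = {i. i < r \<and> \<not> (\<exists>c. \<forall>x\<in>polyP r v a. inner (vr (v i)) x = c)}"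

definition latt_kP :: "nat \<Rightarrow> (nat \<Rightarrow> int ^ 'n::finite) \<Rightarrow> (nat \<Rightarrow> int) \<Rightarrow> nat \<Rightarrow> (int ^ 'n) set" where
  "latt_kP r v a k = {z. vr z \<in> (\<lambda>x. real k *\<^sub>R x) ` polyP r v a}"

definition iinner :: "int ^ 'n::finite \<Rightarrow> int ^ 'n \<Rightarrow> int" where
  "iinner u z = (\<Sum>j\<in>UNIV. u $ j * z $ j)"

definition multinom :: "nat \<Rightarrow> nat \<Rightarrow> (nat \<Rightarrow> nat) \<Rightarrow> real" where
  "multinom N r ks = fact N / (\<Prod>i<r. fact (ks i))"

text \<open>Unnormalised weight P(X_{ka} = z) (proportional to it).\<close>
definition wt :: "nat \<Rightarrow> (nat \<Rightarrow> int ^ 'n::finite) \<Rightarrow> (nat \<Rightarrow> int) \<Rightarrow> nat \<Rightarrow> int ^ 'n \<Rightarrow> real" where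
  "wt r v a k z = multinom (nat (int k * (\<Sum>i<r. a i))) r
                    (\<lambda>i. nat (iinner (v i) z + int k * a i))"

text \<open>Integral of f against nu'_k, the law of (X_{ka} - k m_a)/sqrt k.\<close>
definition nu_int :: "nat \<Rightarrow> (nat \<Rightarrow> int ^ 'n::finite) \<Rightarrow> (nat \<Rightarrow> int) \<Rightarrow> nat
                      \<Rightarrow> (real ^ 'n \<Rightarrow> real) \<Rightarrow> real" where
  "nu_int r v a k f =
     (\<Sum>z\<in>latt_kP r v a k. wt r v a k z *
          f ((1 / sqrt (real k)) *\<^sub>R (vr z - real k *\<^sub>R m_a r v a)))
     / (\<Sum>z\<in>latt_kP r v a k. wt r v a k z)"

definition rho_supp :: "nat \<Rightarrow> (nat \<Rightarrow> int ^ 'n::finite) \<Rightarrow> (nat \<Rightarrow> int) \<Rightarrow> real \<Rightarrow> nat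
                        \<Rightarrow> (real ^ 'n) set" where
  "rho_supp r v a c k =
     ball 0 (real k powr c) \<inter> L_a r v a \<inter>
     {x. \<exists>z. x = (1 / sqrt (real k)) *\<^sub>R (vr z - real k *\<^sub>R m_a r v a)}"

definition gauss_wt :: "nat \<Rightarrow> (nat \<Rightarrow> int ^ 'n::finite) \<Rightarrow> (nat \<Rightarrow> int) \<Rightarrow> real ^ 'n \<Rightarrow> real" where
  "gauss_wt r v a x =
     exp (- (1/2) * (\<Sum>i\<in>I_a r v a.
        (inner (vr (v i)) x)^2 / (inner (vr (v i)) (m_a r v a) + real_of_int (a i))))"

definition rho_int :: "nat \<Rightarrow> (nat \<Rightarrow> int ^ 'n::finite) \<Rightarrow> (nat \<Rightarrow> int) \<Rightarrow> real \<Rightarrow> (nat \<Rightarrow> real)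
                       \<Rightarrow> nat \<Rightarrow> (real ^ 'n \<Rightarrow> real) \<Rightarrow> real" where
  "rho_int r v a c d k f =
     (1 / d k) * (\<Sum>x\<in>rho_supp r v a c k. gauss_wt r v a x * f x)"

end

theory Submission
  imports Defs "HOL-Real_Asymp.Real_Asymp"
begin

lemma vr_add: "vr (z + w) = vr z + vr w" by (simp add: vr_def vec_eq_iff)
lemma vr_diff: "vr (z - w) = vr z - vr w" by (simp add: vr_def vec_eq_iff)
lemma vr_zero[simp]: "vr 0 = 0" by (simp add: vr_def vec_eq_iff)
lemma vr_sum: "vr (\<Sum>i\<in>S. f i) = (\<Sum>i\<in>S. vr (f i))"
  by (simp add: vr_def vec_eq_iff)
lemma vr_inj: "vr z = vr w \<longleftrightarrow> z = w"
  by (simp add: vr_def vec_eq_iff)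
lemma vr_comp: "vr z $ j = real_of_int (z $ j)" by (simp add: vr_def)
lemma iinner_vr: "real_of_int (iinner u z) = inner (vr u) (vr z)"
  by (simp add: iinner_def inner_vec_def vr_def)

lemma ln_less_minus_one: assumes "0 < (u::real)" "u \<noteq> 1" shows "ln u < u - 1"
proof -
  define q where "q = sqrt u"
  have q: "q > 0" "q \<noteq> 1" "u = q * q" using assms by (auto simp: q_def)
  have "ln u = 2 * ln q" using q by (simp add: ln_mult)
  also have "\<dots> \<le> 2 * (q - 1)" using ln_le_minus_one[OF q(1)] by simp
  also have "\<dots> < u - 1"
  proof -
    have "(q - 1)^2 > 0" using q by simp
    thus ?thesis using q by (simp add: power2_eq_square algebra_simps)
  qed
  finally show ?thesis .
qed

definition hh :: "real \<Rightarrow> real" where "hh t = t * ln t"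

lemma hh_tangent:
  assumes y: "y > 0" and x: "x \<ge> 0"
  shows "hh x \<ge> hh y + (ln y + 1) * (x - y)"
    and "x \<noteq> y \<Longrightarrow> hh x > hh y + (ln y + 1) * (x - y)"
proof -
  have key: "hh x - hh y - (ln y + 1) * (x - y) = x * ln (x / y) - x + y" if "x > 0"
    using that y by (simp add: hh_def ln_div algebra_simps)
  have A: "x * ln (x/y) - x + y \<ge> 0" if "x > 0"
  proof -
    have "ln (y/x) \<le> y/x - 1" using that y by (intro ln_le_minus_one) auto
    hence "ln (x/y) \<ge> 1 - y/x" using that y by (simp add: ln_div)
    hence "x * ln (x/y) \<ge> x * (1 - y/x)" using that by (intro mult_left_mono) auto
    moreover have "x * (1 - y/x) = x - y" using that by (simp add: field_simps)
    ultimately show ?thesis by linarith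
  qed
  have B: "x * ln (x/y) - x + y > 0" if "x > 0" "x \<noteq> y"
  proof -
    have "ln (y/x) < y/x - 1" using that y by (intro ln_less_minus_one) (auto simp: field_simps)
    hence "ln (x/y) > 1 - y/x" using that y by (simp add: ln_div)
    hence "x * ln (x/y) > x * (1 - y/x)" using that by (intro mult_strict_left_mono) auto
    moreover have "x * (1 - y/x) = x - y" using that by (simp add: field_simps)
    ultimately show ?thesis by linarith
  qed
  show "hh x \<ge> hh y + (ln y + 1) * (x - y)"
  proof (cases "x = 0")
    case True thus ?thesis using y by (simp add: hh_def algebra_simps)
  next
    case False thus ?thesis using key[of] A x by force
  qed
  show "hh x > hh y + (ln y + 1) * (x - y)" if "x \<noteq> y"
  proof (cases "x = 0")
    case True thus ?thesis using y by (simp add: hh_def algebra_simps)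
  next
    case False thus ?thesis using key B x that by force
  qed
qed

lemma hh_convex:
  assumes "x \<ge> 0" "y \<ge> 0" "0 \<le> s" "s \<le> 1"
  shows "hh (s * x + (1 - s) * y) \<le> s * hh x + (1 - s) * hh y"
proof -
  define z where "z = s * x + (1 - s) * y"
  have z0: "z \<ge> 0" using assms by (simp add: z_def)
  show ?thesis
  proof (cases "z = 0")
    case True
    show ?thesis
    proof (cases "s = 0 \<or> s = 1")
      case True thus ?thesis by auto
    next
      case False
      hence "x = 0 \<and> y = 0" using \<open>z = 0\<close> assms unfolding z_def
        by (smt (verit) mult_nonneg_nonneg mult_pos_pos)
      thus ?thesis by (simp add: hh_def)
    qed
  next
    case False
    hence zp: "z > 0" using z0 by auto
    have 1: "hh x \<ge> hh z + (ln z + 1) * (x - z)" by (rule hh_tangent(1)[OF zp assms(1)])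
    have 2: "hh y \<ge> hh z + (ln z + 1) * (y - z)" by (rule hh_tangent(1)[OF zp assms(2)])
    have "s * hh x + (1 - s) * hh y \<ge> s * (hh z + (ln z + 1) * (x - z)) + (1 - s) * (hh z + (ln z + 1) * (y - z))"
      using 1 2 assms by (intro add_mono mult_left_mono) auto
    also have "s * (hh z + (ln z + 1) * (x - z)) + (1 - s) * (hh z + (ln z + 1) * (y - z)) = hh z"
      unfolding z_def by (simp add: algebra_simps)
    finally show ?thesis unfolding z_def .
  qed
qed

lemma hh_mid_strict:
  assumes "x \<ge> 0" "y \<ge> 0" "x \<noteq> y"
  shows "hh ((x + y) / 2) < (hh x + hh y) / 2"
proof -
  define z where "z = (x + y) / 2"
  have zp: "z > 0" using assms by (simp add: z_def)
  have "x \<noteq> z \<or> y \<noteq> z" using assms by (auto simp: z_def)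
  moreover have 1: "hh x \<ge> hh z + (ln z + 1) * (x - z)" by (rule hh_tangent(1)[OF zp assms(1)])
  moreover have 2: "hh y \<ge> hh z + (ln z + 1) * (y - z)" by (rule hh_tangent(1)[OF zp assms(2)])
  moreover have "x \<noteq> z \<Longrightarrow> hh x > hh z + (ln z + 1) * (x - z)" by (rule hh_tangent(2)[OF zp assms(1)])
  moreover have "y \<noteq> z \<Longrightarrow> hh y > hh z + (ln z + 1) * (y - z)" by (rule hh_tangent(2)[OF zp assms(2)])
  moreover have "(ln z + 1) * (x - z) + (ln z + 1) * (y - z) = 0" by (simp add: z_def algebra_simps)
  ultimately have "hh x + hh y > 2 * hh z" by (cases "x = z") linarith+
  thus ?thesis unfolding z_def by simp
qed

lemma hh_cont: "continuous_on {0..} hh"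
proof -
  have lim0: "(hh \<longlongrightarrow> 0) (at_right 0)" unfolding hh_def by real_asymp
  show ?thesis
  proof (rule continuous_on_eq_continuous_within[THEN iffD2], intro ballI)
    fix x :: real assume "x \<in> {0..}"
    show "continuous (at x within {0..}) hh"
    proof (cases "x = 0")
      case False
      hence "x > 0" using \<open>x \<in> {0..}\<close> by auto
      hence "isCont hh x" unfolding hh_def by (intro continuous_intros) auto
      thus ?thesis using continuous_at_imp_continuous_at_within by blast
    next
      case True
      have "(hh \<longlongrightarrow> hh 0) (at 0 within {0..})" using lim0 
        by (simp add: hh_def at_within_Ici_at_right)
      show ?thesis unfolding continuous_within True
        by (metis \<open>(hh \<longlongrightarrow> hh 0) (at 0 within {0..})\<close>)
    qed
  qed
qed

lemma selfpow_hh: "t \<ge> 0 \<Longrightarrow> selfpow t = exp (hh t)"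
  by (auto simp: selfpow_def hh_def powr_def)


locale lsetup =
  fixes r :: nat and v :: "nat \<Rightarrow> int ^ ('n::finite)" and a :: "nat \<Rightarrow> int"
  assumes sumv: "(\<Sum>i<r. v i) = 0"
    and cpt: "compact (polyP r v a)"
    and meet: "\<forall>i<r. \<exists>x\<in>polyP r v a. inner (vr (v i)) x + real_of_int (a i) = 0"
begin

abbreviation "P \<equiv> polyP r v a"
abbreviation "I \<equiv> I_a r v a"
abbreviation "L \<equiv> L_a r v a"
abbreviation "m \<equiv> m_a r v a"
definition tt :: "nat \<Rightarrow> real ^ 'n \<Rightarrow> real" where "tt i x = inner (vr (v i)) x + real_of_int (a i)"
definition "AA = real_of_int (\<Sum>i<r. a i)"
definition FF :: "real ^ 'n \<Rightarrow> real" where "FF x = (\<Sum>i<r. hh (tt i x))"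

lemma inP: "x \<in> P \<longleftrightarrow> (\<forall>i<r. tt i x \<ge> 0)"
  by (simp add: polyP_def tt_def)

lemma tt_add: "tt i (x + y) = tt i x + inner (vr (v i)) y"
  by (simp add: tt_def inner_add_right)
lemma tt_diff: "tt i x - tt i y = inner (vr (v i)) (x - y)"
  by (simp add: tt_def inner_diff_right)
lemma tt_comb: "tt i (s *\<^sub>R x + (1 - s) *\<^sub>R y) = s * tt i x + (1 - s) * tt i y"
  by (simp add: tt_def inner_add_right algebra_simps)

lemma sum_inner_v: "(\<Sum>i<r. inner (vr (v i)) u) = 0"
proof -
  have "(\<Sum>i<r. inner (vr (v i)) u) = inner (vr (\<Sum>i<r. v i)) u"
    by (simp add: vr_sum inner_sum_left)
  thus ?thesis by (simp add: sumv)
qed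

lemma sum_tt: "(\<Sum>i<r. tt i x) = AA"
  using sum_inner_v[of x] by (simp add: tt_def sum.distrib AA_def inner_commute)

lemma P_closed: "closed P" using cpt compact_imp_closed by blast
lemma P_bounded: "bounded P" using cpt compact_imp_bounded by blast

lemma r_pos: "r > 0"
proof (rule ccontr)
  assume "\<not> r > 0"
  hence "P = UNIV" by (auto simp: polyP_def)
  thus False using P_bounded by simp
qed

lemma P_ne: "P \<noteq> {}" using meet r_pos by auto

lemma P_convex: "x \<in> P \<Longrightarrow> y \<in> P \<Longrightarrow> 0 \<le> s \<Longrightarrow> s \<le> 1 \<Longrightarrow> s *\<^sub>R x + (1 - s) *\<^sub>R y \<in> P"
  unfolding inP tt_comb by (auto intro!: add_nonneg_nonneg mult_nonneg_nonneg)

lemma AA_nonneg: "AA \<ge> 0"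
proof -
  obtain x where "x \<in> P" using P_ne by auto
  hence "(\<Sum>i<r. tt i x) \<ge> 0" by (intro sum_nonneg) (auto simp: inP)
  thus ?thesis by (simp add: sum_tt)
qed

lemma notI_zero: assumes "i < r" "i \<notin> I" "x \<in> P" shows "tt i x = 0"
proof -
  obtain c where c: "\<forall>x\<in>P. inner (vr (v i)) x = c" using assms unfolding I_a_def by auto
  obtain y where y: "y \<in> P" "inner (vr (v i)) y + real_of_int (a i) = 0" using meet assms by auto
  show ?thesis using c y assms by (simp add: tt_def)
qed

lemma notI_orth: assumes "i < r" "i \<notin> I" "x \<in> P" "y \<in> P" shows "inner (vr (v i)) (x - y) = 0"
  using notI_zero[OF assms(1,2,3)] notI_zero[OF assms(1,2,4)] tt_diff[of i x y] by simp

lemma I_sub: "I \<subseteq> {..<r}" by (auto simp: I_a_def)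
lemma I_fin: "finite I" using I_sub finite_subset by blast

lemma I_pos_point: assumes "i \<in> I" shows "\<exists>p\<in>P. tt i p > 0"
proof (rule ccontr)
  assume "\<not> ?thesis"
  hence "\<forall>p\<in>P. tt i p = 0" using assms I_sub inP by force
  hence "\<forall>p\<in>P. inner (vr (v i)) p = - real_of_int (a i)" by (auto simp: tt_def)
  thus False using assms unfolding I_a_def by auto
qed

lemma phi_FF: "x \<in> P \<Longrightarrow> phi_a r v a x = exp (FF x)"
  unfolding phi_a_def FF_def
  by (simp add: exp_sum selfpow_hh inP tt_def[symmetric])

lemma FF_cont: "continuous_on P FF"
proof -
  have "continuous_on P (\<lambda>x. hh (tt i x))" if "i < r" for i
  proof (rule continuous_on_compose2[OF hh_cont])
    show "continuous_on P (tt i)" unfolding tt_def by (intro continuous_intros)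
    show "tt i ` P \<subseteq> {0..}" using that by (auto simp: inP)
  qed
  thus ?thesis unfolding FF_def by (intro continuous_on_sum) auto
qed

lemma FF_conv: assumes "x \<in> P" "y \<in> P" "0 \<le> s" "s \<le> 1"
  shows "FF (s *\<^sub>R x + (1 - s) *\<^sub>R y) \<le> s * FF x + (1 - s) * FF y"
proof -
  have "FF (s *\<^sub>R x + (1 - s) *\<^sub>R y) = (\<Sum>i<r. hh (s * tt i x + (1 - s) * tt i y))"
    by (simp add: FF_def tt_comb)
  also have "\<dots> \<le> (\<Sum>i<r. s * hh (tt i x) + (1 - s) * hh (tt i y))"
    using assms by (intro sum_mono hh_convex) (auto simp: inP)
  also have "\<dots> = s * FF x + (1 - s) * FF y" by (simp add: FF_def sum.distrib sum_distrib_left)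
  finally show ?thesis .
qed

lemma line_zero: assumes "\<forall>i<r. inner (vr (v i)) u = 0" "x \<in> P" shows "u = 0"
proof (rule ccontr)
  assume u: "u \<noteq> 0"
  obtain B where B: "\<forall>y\<in>P. norm y \<le> B" using P_bounded bounded_iff by blast
  have "x + t *\<^sub>R u \<in> P" for t
    using assms unfolding inP by (simp add: tt_add inner_scaleR_right)
  hence "norm (x + t *\<^sub>R u) \<le> B" for t using B by blast
  define t where "t = (B + norm x + 1) / norm u"
  have Bx: "norm x \<le> B" using B assms(2) by auto
  have "norm (t *\<^sub>R u) = norm ((x + t *\<^sub>R u) - x)" by simp
  also have "\<dots> \<le> norm (x + t *\<^sub>R u) + norm x" by (rule norm_triangle_ineq4)
  also have "\<dots> \<le> B + norm x" using \<open>\<And>t. norm (x + t *\<^sub>R u) \<le> B\<close> by simp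
  finally have 1: "norm (t *\<^sub>R u) \<le> B + norm x" .
  have "t \<ge> 0" unfolding t_def using Bx u by (intro divide_nonneg_nonneg) (use norm_ge_zero[of x] in linarith, simp)
  hence "norm (t *\<^sub>R u) = t * norm u" by simp
  also have "\<dots> = B + norm x + 1" using u by (simp add: t_def)
  finally have 2: "norm (t *\<^sub>R u) = B + norm x + 1" .
  show False using 1 2 by simp
qed

lemma minimizer_relint:
  assumes m0: "m0 \<in> P" "\<forall>x\<in>P. FF m0 \<le> FF x" and j: "j \<in> I"
  shows "tt j m0 > 0"
proof (rule ccontr)
  assume "\<not> tt j m0 > 0"
  hence j0: "tt j m0 = 0" using m0 j I_sub inP by force
  obtain p where p: "p \<in> P" "tt j p > 0" using I_pos_point[OF j] by auto
  define C where "C = (\<Sum>i<r. hh (tt i p) - hh (tt i m0))"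
  define s where "s = exp (- (\<bar>C\<bar> + 1) / tt j p)"
  have s: "0 < s" "s \<le> 1" using p by (auto simp: s_def intro!: divide_nonpos_pos)
  have lns: "tt j p * ln s = - (\<bar>C\<bar> + 1)" using p by (simp add: s_def)
  define y where "y = s *\<^sub>R p + (1 - s) *\<^sub>R m0"
  have yP: "y \<in> P" unfolding y_def using P_convex p m0 s by auto
  have jr: "j < r" using j I_sub by auto
  have each: "hh (tt i y) - hh (tt i m0) \<le> s * (hh (tt i p) - hh (tt i m0)) + (if i = j then s * tt j p * ln s else 0)"
    if "i < r" for i
  proof (cases "i = j")
    case True
    have "tt j y = s * tt j p" using j0 by (simp add: y_def tt_comb)
    hence "hh (tt j y) = s * hh (tt j p) + s * tt j p * ln s"
      using s p by (simp add: hh_def ln_mult algebra_simps)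
    thus ?thesis using True j0 by (simp add: hh_def)
  next
    case False
    have "hh (tt i y) \<le> s * hh (tt i p) + (1 - s) * hh (tt i m0)"
      unfolding y_def tt_comb using that p m0 s by (intro hh_convex) (auto simp: inP)
    thus ?thesis using False by (simp add: algebra_simps)
  qed
  have "FF y - FF m0 = (\<Sum>i<r. hh (tt i y) - hh (tt i m0))" by (simp add: FF_def sum_subtractf)
  also have "\<dots> \<le> (\<Sum>i<r. s * (hh (tt i p) - hh (tt i m0)) + (if i = j then s * tt j p * ln s else 0))"
    by (intro sum_mono each) auto
  also have "\<dots> = s * C + s * tt j p * ln s"
    using jr by (simp add: sum.distrib sum_distrib_left C_def)
  also have "\<dots> = s * C + s * (tt j p * ln s)" by (simp add: mult.assoc)
  also have "\<dots> = s * (C - (\<bar>C\<bar> + 1))" unfolding lns by (simp add: algebra_simps)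
  also have "\<dots> < 0" using s by (intro mult_pos_neg) auto
  finally show False using m0 yP by force
qed

lemma FF_min_exists: "\<exists>m0\<in>P. \<forall>x\<in>P. FF m0 \<le> FF x"
  using continuous_attains_inf[OF cpt P_ne FF_cont] by auto

lemma FF_min_unique:
  assumes m1: "m1 \<in> P" "\<forall>x\<in>P. FF m1 \<le> FF x" and m2: "m2 \<in> P" "\<forall>x\<in>P. FF m2 \<le> FF x"
  shows "m1 = m2"
proof (rule ccontr)
  assume ne: "m1 \<noteq> m2"
  have "\<exists>i<r. inner (vr (v i)) (m2 - m1) \<noteq> 0"
  proof (rule ccontr)
    assume "\<not> ?thesis"
    hence "m2 - m1 = 0" using line_zero m1 by blast
    thus False using ne by simp
  qed
  then obtain i where i: "i < r" "inner (vr (v i)) (m2 - m1) \<noteq> 0" by auto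
  have tne: "tt i m1 \<noteq> tt i m2" using i tt_diff[of i m2 m1] by auto
  define y where "y = (1/2::real) *\<^sub>R m1 + (1 - 1/2) *\<^sub>R m2"
  have yP: "y \<in> P" unfolding y_def by (rule P_convex) (use m1 m2 in auto)
  have "FF y = (\<Sum>k<r. hh ((tt k m1 + tt k m2) / 2))"
    unfolding FF_def y_def tt_comb by (simp add: add_divide_distrib)
  also have "\<dots> < (\<Sum>k<r. (hh (tt k m1) + hh (tt k m2)) / 2)"
  proof (rule sum_strict_mono_ex1)
    show "\<forall>k\<in>{..<r}. hh ((tt k m1 + tt k m2) / 2) \<le> (hh (tt k m1) + hh (tt k m2)) / 2"
    proof
      fix k assume "k \<in> {..<r}"
      hence "0 \<le> tt k m1" "0 \<le> tt k m2" using m1 m2 by (auto simp: inP)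
      thus "hh ((tt k m1 + tt k m2) / 2) \<le> (hh (tt k m1) + hh (tt k m2)) / 2"
        using hh_convex[of "tt k m1" "tt k m2" "1/2"] by (simp add: add_divide_distrib)
    qed
    show "\<exists>k\<in>{..<r}. hh ((tt k m1 + tt k m2) / 2) < (hh (tt k m1) + hh (tt k m2)) / 2"
      using i tne m1 m2 by (intro bexI[of _ i] hh_mid_strict) (auto simp: inP)
  qed auto
  also have "\<dots> = (FF m1 + FF m2) / 2" unfolding FF_def add_divide_distrib sum.distrib sum_divide_distrib by simp
  finally have "FF y < (FF m1 + FF m2) / 2" .
  moreover have "FF m1 \<le> FF y" "FF m2 \<le> FF y" using m1 m2 yP by auto
  ultimately show False by simp
qed

lemma m_props: "m \<in> P" "\<forall>x\<in>P. FF m \<le> FF x"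
proof -
  have eq: "(m0 \<in> P \<and> (\<forall>x\<in>P. phi_a r v a m0 \<le> phi_a r v a x)) \<longleftrightarrow> (m0 \<in> P \<and> (\<forall>x\<in>P. FF m0 \<le> FF x))" for m0
    by (auto simp: phi_FF)
  have "\<exists>!m0. m0 \<in> P \<and> (\<forall>x\<in>P. FF m0 \<le> FF x)"
    using FF_min_exists FF_min_unique by blast
  hence "\<exists>!m0. m0 \<in> P \<and> (\<forall>x\<in>P. phi_a r v a m0 \<le> phi_a r v a x)" using eq by simp
  hence "m \<in> P \<and> (\<forall>x\<in>P. phi_a r v a m \<le> phi_a r v a x)" unfolding m_a_def by (rule theI')
  thus "m \<in> P" "\<forall>x\<in>P. FF m \<le> FF x" using eq by blast+
qed

lemma m_relint: "i \<in> I \<Longrightarrow> tt i m > 0"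
  using minimizer_relint m_props by blast

end

context lsetup begin

definition Lp :: "(real ^ 'n) set" where
  "Lp = {u. \<forall>i<r. i \<notin> I \<longrightarrow> inner (vr (v i)) u = 0}"

lemma Lp_subspace: "subspace Lp"
  unfolding subspace_def Lp_def by (auto simp: inner_add_right inner_scaleR_right)

lemma L_sub_Lp: "L \<subseteq> Lp"
  unfolding L_a_def
proof (rule span_minimal[OF _ Lp_subspace])
  show "{p - q |p q. p \<in> P \<and> q \<in> P} \<subseteq> Lp"
    using notI_orth by (auto simp: Lp_def)
qed

lemma near_m: "\<exists>\<delta>>0. \<forall>u\<in>Lp. norm u \<le> \<delta> \<longrightarrow> m + u \<in> P"
proof -
  have "\<exists>\<delta>>0. \<forall>i\<in>I. \<delta> * (norm (vr (v i)) + 1) \<le> tt i m"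
  proof (cases "I = {}")
    case True thus ?thesis by (intro exI[of _ 1]) auto
  next
    case False
    define \<delta> where "\<delta> = Min ((\<lambda>i. tt i m / (norm (vr (v i)) + 1)) ` I)"
    have "\<delta> > 0" unfolding \<delta>_def using False I_fin m_relint
      by (subst Min_gr_iff) (auto intro!: divide_pos_pos add_nonneg_pos)
    moreover have "\<delta> * (norm (vr (v i)) + 1) \<le> tt i m" if "i \<in> I" for i
    proof -
      have "\<delta> \<le> tt i m / (norm (vr (v i)) + 1)" unfolding \<delta>_def using that I_fin by auto
      thus ?thesis by (simp add: pos_le_divide_eq add_nonneg_pos)
    qed
    ultimately show ?thesis by blast
  qed
  then obtain \<delta> where d: "\<delta> > 0" "\<forall>i\<in>I. \<delta> * (norm (vr (v i)) + 1) \<le> tt i m" by auto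
  have "m + u \<in> P" if u: "u \<in> Lp" "norm u \<le> \<delta>" for u
    unfolding inP
  proof (intro allI impI)
    fix i assume i: "i < r"
    show "tt i (m + u) \<ge> 0"
    proof (cases "i \<in> I")
      case True
      have "\<bar>inner (vr (v i)) u\<bar> \<le> norm (vr (v i)) * norm u" by (rule Cauchy_Schwarz_ineq2)
      also have "\<dots> \<le> norm (vr (v i)) * \<delta>" using u by (intro mult_left_mono) auto
      also have "\<dots> \<le> tt i m" using d True by (smt (verit) mult.commute mult_nonneg_nonneg norm_ge_zero distrib_left)
      finally show ?thesis by (simp add: tt_add)
    next
      case False
      thus ?thesis using u i notI_zero[OF i False m_props(1)] by (simp add: tt_add Lp_def)
    qed
  qed
  thus ?thesis using d by blast
qed

lemma Lp_sub_L: "Lp \<subseteq> L"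
proof
  fix u assume u: "u \<in> Lp"
  obtain \<delta> where d: "\<delta> > 0" "\<forall>u\<in>Lp. norm u \<le> \<delta> \<longrightarrow> m + u \<in> P" using near_m by auto
  show "u \<in> L"
  proof (cases "u = 0")
    case True thus ?thesis by (simp add: L_a_def span_zero)
  next
    case False
    define e where "e = \<delta> / norm u"
    have e: "e > 0" using d False by (simp add: e_def)
    have "e *\<^sub>R u \<in> Lp" using u Lp_subspace by (simp add: subspace_scale)
    moreover have "norm (e *\<^sub>R u) \<le> \<delta>" using e False d(1) by (simp add: e_def)
    ultimately have "m + e *\<^sub>R u \<in> P" using d by blast
    moreover have "e *\<^sub>R u = (m + e *\<^sub>R u) - m" by simp
    ultimately have "e *\<^sub>R u \<in> {p - q |p q. p \<in> P \<and> q \<in> P}" using m_props(1)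
      by blast
    hence "e *\<^sub>R u \<in> L" unfolding L_a_def by (rule span_base)
    hence "(1/e) *\<^sub>R (e *\<^sub>R u) \<in> L" unfolding L_a_def by (rule span_mul)
    thus ?thesis using e by simp
  qed
qed

lemma L_eq: "L = Lp" using L_sub_Lp Lp_sub_L by blast

lemma L_subspace: "subspace L" unfolding L_a_def by (rule subspace_span)

lemma L_notI: "u \<in> L \<Longrightarrow> i < r \<Longrightarrow> i \<notin> I \<Longrightarrow> inner (vr (v i)) u = 0"
  using L_eq by (auto simp: Lp_def)

lemma sumI_inner: assumes "u \<in> L" shows "(\<Sum>i\<in>I. inner (vr (v i)) u) = 0"
proof -
  have "(\<Sum>i\<in>I. inner (vr (v i)) u) = (\<Sum>i<r. inner (vr (v i)) u)"
    by (rule sum.mono_neutral_left) (use I_sub L_notI assms in auto)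
  thus ?thesis using sum_inner_v by simp
qed

lemma P_diff_L: "x \<in> P \<Longrightarrow> y \<in> P \<Longrightarrow> x - y \<in> L"
  unfolding L_a_def by (rule span_base) auto

definition QQ :: "real ^ 'n \<Rightarrow> real" where "QQ u = (\<Sum>i\<in>I. (inner (vr (v i)) u)^2)"

lemma QQ_scale: "QQ (c *\<^sub>R u) = c^2 * QQ u"
  by (simp add: QQ_def inner_scaleR_right power_mult_distrib sum_distrib_left)

lemma QQ_zero: assumes "u \<in> L" "QQ u = 0" shows "u = 0"
proof -
  have "\<forall>i\<in>I. inner (vr (v i)) u = 0" using assms(2) I_fin unfolding QQ_def
    by (subst (asm) sum_nonneg_eq_0_iff) auto
  hence "\<forall>i<r. inner (vr (v i)) u = 0" using L_notI assms(1) by blast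
  thus ?thesis using line_zero m_props(1) by blast
qed

lemma posdef: "\<exists>\<kappa>>0. \<forall>u\<in>L. QQ u \<ge> \<kappa> * (norm u)^2"
proof (cases "L \<inter> sphere 0 1 = {}")
  case True
  have "u = 0" if "u \<in> L" for u
  proof (rule ccontr)
    assume "u \<noteq> 0"
    hence "(1 / norm u) *\<^sub>R u \<in> L \<inter> sphere 0 1" using that L_subspace
      by (auto simp: subspace_scale)
    thus False using True by blast
  qed
  show ?thesis
  proof (intro exI[of _ "1::real"] conjI ballI)
    fix u assume "u \<in> L"
    hence "u = 0" using \<open>\<And>u. u \<in> L \<Longrightarrow> u = 0\<close> by blast
    thus "QQ u \<ge> 1 * (norm u)^2" by (simp add: QQ_def)
  qed simp
next
  case False
  have cpt: "compact (L \<inter> sphere 0 1)"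
    using L_subspace closed_subspace by (intro closed_Int_compact) auto
  have cont: "continuous_on (L \<inter> sphere 0 1) QQ" unfolding QQ_def by (intro continuous_intros)
  obtain u0 where u0: "u0 \<in> L \<inter> sphere 0 1" "\<forall>u\<in>L \<inter> sphere 0 1. QQ u0 \<le> QQ u"
    using continuous_attains_inf[OF cpt False cont] by auto
  have Qnn: "QQ u \<ge> 0" for u unfolding QQ_def by (intro sum_nonneg) auto
  have k: "QQ u0 > 0" using QQ_zero[of u0] u0 Qnn[of u0] by force
  have "QQ u \<ge> QQ u0 * (norm u)^2" if "u \<in> L" for u
  proof (cases "u = 0")
    case True thus ?thesis by (simp add: QQ_def)
  next
    case False
    have "(1 / norm u) *\<^sub>R u \<in> L \<inter> sphere 0 1" using that L_subspace False
      by (auto simp: subspace_scale)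
    hence "QQ u0 \<le> QQ ((1 / norm u) *\<^sub>R u)" using u0 by blast
    also have "\<dots> = QQ u / (norm u)^2" by (simp add: QQ_scale power_divide)
    finally show ?thesis using False by (simp add: pos_le_divide_eq)
  qed
  thus ?thesis using k by blast
qed

lemma foc: assumes u: "u \<in> L" shows "(\<Sum>i\<in>I. inner (vr (v i)) u * ln (tt i m)) = 0"
proof -
  define b where "b i = inner (vr (v i)) u" for i
  obtain \<delta> where d: "\<delta> > 0" "\<forall>u\<in>Lp. norm u \<le> \<delta> \<longrightarrow> m + u \<in> P" using near_m by auto
  define G where "G s = (\<Sum>i\<in>I. hh (tt i m + s * b i))" for s
  have FG: "FF (m + s *\<^sub>R u) = G s" for s
  proof -
    have "FF (m + s *\<^sub>R u) = (\<Sum>i<r. hh (tt i m + s * b i))"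
      by (simp add: FF_def tt_add b_def inner_scaleR_right)
    also have "\<dots> = G s" unfolding G_def
    proof (rule sum.mono_neutral_right)
      show "\<forall>i\<in>{..<r} - I. hh (tt i m + s * b i) = 0"
        using L_notI[OF u] notI_zero m_props(1) by (auto simp: b_def hh_def)
    qed (use I_sub in auto)
    finally show ?thesis .
  qed
  define d where "d = \<delta> / (norm u + 1)"
  have dpos: "d > 0" using d by (simp add: d_def add_nonneg_pos)
  have loc: "\<forall>s. \<bar>0 - s\<bar> < d \<longrightarrow> G 0 \<le> G s"
  proof (intro allI impI)
    fix s :: real assume "\<bar>0 - s\<bar> < d"
    hence "\<bar>s\<bar> * (norm u + 1) < \<delta>"
      by (simp add: d_def pos_less_divide_eq add_nonneg_pos)
    moreover have "\<bar>s\<bar> * norm u \<le> \<bar>s\<bar> * (norm u + 1)" by (intro mult_left_mono) auto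
    ultimately have "\<bar>s\<bar> * norm u \<le> \<delta>" by linarith
    moreover have "s *\<^sub>R u \<in> Lp" using u L_eq Lp_subspace by (simp add: subspace_scale)
    ultimately have "m + s *\<^sub>R u \<in> P" using d by simp
    hence "FF m \<le> FF (m + s *\<^sub>R u)" using m_props by blast
    thus "G 0 \<le> G s" using FG[of 0] FG[of s] by simp
  qed
  have der: "(G has_real_derivative (\<Sum>i\<in>I. b i * (ln (tt i m) + 1))) (at 0)"
    unfolding G_def hh_def
    apply (rule derivative_eq_intros refl | use m_relint in force)+
    apply (rule sum.cong[OF refl])
    subgoal for n using m_relint[of n] by (simp add: field_simps)
    done
  have "(\<Sum>i\<in>I. b i * (ln (tt i m) + 1)) = 0" by (rule DERIV_local_min[OF der dpos loc])
  moreover have "(\<Sum>i\<in>I. b i) = 0" using sumI_inner[OF u] by (simp add: b_def)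
  ultimately show ?thesis by (simp add: b_def distrib_left sum.distrib)
qed

end

definition ratv :: "real ^ 'n::finite \<Rightarrow> bool" where "ratv x \<longleftrightarrow> (\<forall>j. x $ j \<in> \<rat>)"

lemma ratv_inner: "ratv x \<Longrightarrow> ratv y \<Longrightarrow> inner x y \<in> \<rat>"
  unfolding ratv_def inner_vec_def by (intro Rats_sum) (simp add: Rats_mult)

lemma ratv_diff: "ratv x \<Longrightarrow> ratv y \<Longrightarrow> ratv (x - y)"
  unfolding ratv_def by (simp add: Rats_diff)

lemma ratv_sum: "(\<And>b. b \<in> S \<Longrightarrow> ratv (f b)) \<Longrightarrow> ratv (\<Sum>b\<in>S. f b)"
  unfolding ratv_def by (auto intro!: Rats_sum)

lemma ratv_scale: "c \<in> \<rat> \<Longrightarrow> ratv x \<Longrightarrow> ratv (c *\<^sub>R x)"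
  unfolding ratv_def by (simp add: Rats_mult)

lemma ratv_vr: "ratv (vr z)" unfolding ratv_def vr_def by simp

lemma ratv_GS_step:
  assumes "ratv x" "\<And>b. b \<in> S \<Longrightarrow> ratv b"
  shows "ratv (x - (\<Sum>b\<in>S. (b \<bullet> x / (b \<bullet> b)) *\<^sub>R b))"
  using assms by (intro ratv_diff ratv_sum ratv_scale Rats_divide ratv_inner) auto

lemma rat_orth_ext:
  fixes S :: "(real ^ 'n::finite) set"
  assumes "finite T" "finite S" "pairwise orthogonal S" "\<forall>s\<in>S. ratv s" "\<forall>t\<in>T. ratv t"
  shows "\<exists>U. finite U \<and> (\<forall>u\<in>U. ratv u) \<and> pairwise orthogonal (S \<union> U) \<and> span (S \<union> U) = span (S \<union> T)"
using assms
proof (induction arbitrary: S)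
  case empty then show ?case
    by (intro exI[of _ "{}"]) auto
next
  case (insert a T)
  define a' where "a' = a - (\<Sum>b\<in>S. (b \<bullet> a / (b \<bullet> b)) *\<^sub>R b)"
  have ra': "ratv a'" unfolding a'_def using insert.prems by (intro ratv_GS_step) auto
  have po: "pairwise orthogonal (insert a' S)"
  proof (rule pairwise_orthogonal_insert[OF insert.prems(2)])
    fix y assume "y \<in> S"
    hence "orthogonal y a'" unfolding a'_def
      by (intro Gram_Schmidt_step[OF insert.prems(2)] span_base)
    thus "orthogonal a' y" by (simp add: orthogonal_commute)
  qed
  have "\<forall>s\<in>insert a' S. ratv s" using insert.prems ra' by auto
  moreover have "\<forall>t\<in>T. ratv t" using insert.prems by auto
  moreover have "finite (insert a' S)" using insert.prems by auto
  ultimately obtain U where U: "finite U" "\<forall>u\<in>U. ratv u" and orthU: "pairwise orthogonal (insert a' S \<union> U)"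
             and spanU: "span (insert a' S \<union> U) = span (insert a' S \<union> T)"
    using insert.IH [of "insert a' S"] po by blast
  have "span (S \<union> insert a' U) = span (insert a' (S \<union> T))"
    using spanU by simp
  also have "\<dots> = span (insert a (S \<union> T))"
    by (simp add: a'_def span_neg span_sum span_base span_mul eq_span_insert_eq)
  also have "\<dots> = span (S \<union> insert a T)"
    by simp
  finally show ?case
    using orthU U ra' by (intro exI[of _ "insert a' U"]) auto
qed

lemma int_mult_exists:
  assumes "finite J" "\<forall>j\<in>J. x j \<in> \<rat>"
  shows "\<exists>q::nat. q > 0 \<and> (\<forall>j\<in>J. real q * x j \<in> \<int>)"
using assms
proof (induction)
  case empty thus ?case by (intro exI[of _ 1]) auto
next
  case (insert j J)
  obtain q where q: "q > 0" "\<forall>i\<in>J. real q * x i \<in> \<int>" using insert by auto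
  have xj: "x j \<in> \<rat>" using insert.prems by auto
  obtain p b where pb0: "x j = of_int p / of_int b" "b > 0"
    using Rats_cases'[OF xj] by blast
  define b' where "b' = nat b"
  have pb: "x j = of_int p / of_nat b'" "b' > 0" using pb0 by (auto simp: b'_def)
  have "real (q * b') * x i \<in> \<int>" if "i \<in> J" for i
  proof -
    have "real (q * b') * x i = real b' * (real q * x i)" by simp
    moreover have "real b' \<in> \<int>" by simp
    ultimately show ?thesis using q that Ints_mult by metis
  qed
  moreover have "real (q * b') * x j \<in> \<int>"
  proof -
    have e: "real (q * b') * x j = real q * of_int p" using pb by simp
    show ?thesis unfolding e by (intro Ints_mult) auto
  qed
  ultimately show ?case using q pb by (intro exI[of _ "q * b'"]) auto
qed

lemma int_floor: "x \<in> \<int> \<Longrightarrow> real_of_int \<lfloor>x\<rfloor> = x"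
  by (erule Ints_cases) simp

lemma ratv_int_mult:
  fixes p :: "real ^ 'n::finite"
  assumes "ratv p"
  shows "\<exists>q::nat. \<exists>z. q > 0 \<and> vr z = real q *\<^sub>R p"
proof -
  obtain q :: nat where q: "q > 0" "\<forall>j\<in>UNIV. real q * p $ j \<in> \<int>"
    using int_mult_exists[of UNIV "\<lambda>j. p $ j"] assms by (auto simp: ratv_def)
  define z where "z = (\<chi> j. \<lfloor>real q * p $ j\<rfloor>)"
  have "vr z = real q *\<^sub>R p" using q unfolding vr_def z_def vec_eq_iff
    by (simp add: int_floor)
  thus ?thesis using q by blast
qed

context lsetup begin

lemma L_gen_int:
  "\<exists>zz :: real ^ 'n \<Rightarrow> int ^ 'n. \<exists>qq :: real ^ 'n \<Rightarrow> nat. \<forall>u\<in>L.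
     (\<forall>e\<in>Basis. vr (zz e) \<in> L \<and> qq e > 0) \<and> u = (\<Sum>e\<in>Basis. ((u \<bullet> e) / real (qq e)) *\<^sub>R vr (zz e))"
proof -
  define S where "S = (\<lambda>i. vr (v i)) ` {i. i < r \<and> i \<notin> I}"
  have finS: "finite S" unfolding S_def by auto
  obtain B where B: "finite B" "\<forall>b\<in>B. ratv b" "pairwise orthogonal B" "span B = span S"
    using rat_orth_ext[of S "{}"] finS by (auto simp: S_def ratv_vr)
  define proj where "proj x = x - (\<Sum>b\<in>B. (b \<bullet> x / (b \<bullet> b)) *\<^sub>R b)" for x :: "real ^ 'n"
  have lin: "linear proj"
  proof (rule linearI)
    fix x y
    have "(\<Sum>b\<in>B. (b \<bullet> (x + y) / (b \<bullet> b)) *\<^sub>R b) = (\<Sum>b\<in>B. (b \<bullet> x / (b \<bullet> b)) *\<^sub>R b) + (\<Sum>b\<in>B. (b \<bullet> y / (b \<bullet> b)) *\<^sub>R b)"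
      unfolding sum.distrib[symmetric] by (rule sum.cong) (simp_all add: inner_add_right add_divide_distrib scaleR_add_left)
    thus "proj (x + y) = proj x + proj y" unfolding proj_def by simp
  next
    fix c :: real and x
    have "(\<Sum>b\<in>B. (b \<bullet> (c *\<^sub>R x) / (b \<bullet> b)) *\<^sub>R b) = c *\<^sub>R (\<Sum>b\<in>B. (b \<bullet> x / (b \<bullet> b)) *\<^sub>R b)"
      unfolding scaleR_sum_right by (rule sum.cong) (simp_all add: inner_scaleR_right)
    thus "proj (c *\<^sub>R x) = c *\<^sub>R proj x" unfolding proj_def by (simp add: scaleR_diff_right)
  qed
  have projL: "proj x \<in> L" for x
  proof -
    have "inner (vr (v i)) (proj x) = 0" if "i < r" "i \<notin> I" for i
    proof -
      have "vr (v i) \<in> span B" using B(4) that by (auto simp: S_def intro!: span_base)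
      thus ?thesis using Gram_Schmidt_step[OF B(3), of "vr (v i)" x]
        by (simp add: proj_def orthogonal_def)
    qed
    thus ?thesis using L_eq by (auto simp: Lp_def)
  qed
  have proj_id: "proj u = u" if "u \<in> L" for u
  proof -
    have "b \<bullet> u = 0" if "b \<in> B" for b
    proof -
      have "b \<in> span S" using B(4) that span_base by blast
      moreover have "orthogonal u s" if "s \<in> S" for s
        using that \<open>u \<in> L\<close> L_eq by (auto simp: S_def Lp_def orthogonal_def inner_commute)
      ultimately have "orthogonal u b" using orthogonal_to_span by blast
      thus ?thesis by (simp add: orthogonal_def inner_commute)
    qed
    thus ?thesis by (simp add: proj_def)
  qed
  have "\<forall>e. \<exists>q z. q > 0 \<and> vr z = real q *\<^sub>R proj e \<or> e \<notin> Basis"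
  proof
    fix e :: "real ^ 'n"
    show "\<exists>q z. q > 0 \<and> vr z = real q *\<^sub>R proj e \<or> e \<notin> Basis"
    proof (cases "e \<in> Basis")
      case True
      have "ratv e" using True unfolding Basis_vec_def ratv_def by (auto simp: axis_def)
      hence "ratv (proj e)" unfolding proj_def using B by (intro ratv_GS_step) auto
      then show ?thesis using ratv_int_mult by blast
    qed auto
  qed
  then obtain qq zz where qz: "\<And>e. e \<in> Basis \<Longrightarrow> qq e > 0 \<and> vr (zz e) = real (qq e) *\<^sub>R proj e"
    by metis
  show ?thesis
  proof (intro exI[of _ zz] exI[of _ qq] ballI conjI)
    fix u and e :: "real ^ 'n" assume u: "u \<in> L" and e: "e \<in> Basis"
    show "qq e > 0" using qz e by auto
    show "vr (zz e) \<in> L" using qz[OF e] projL L_subspace by (simp add: subspace_scale)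
  next
    fix u assume u: "u \<in> L"
    have "u = proj u" using proj_id u by simp
    also have "\<dots> = proj (\<Sum>e\<in>Basis. (u \<bullet> e) *\<^sub>R e)" by (simp add: euclidean_representation)
    also have "\<dots> = (\<Sum>e\<in>Basis. (u \<bullet> e) *\<^sub>R proj e)"
      by (simp add: linear_sum[OF lin] linear_scale[OF lin])
    also have "\<dots> = (\<Sum>e\<in>Basis. ((u \<bullet> e) / real (qq e)) *\<^sub>R vr (zz e))"
      by (rule sum.cong) (use qz in auto)
    finally show "u = (\<Sum>e\<in>Basis. ((u \<bullet> e) / real (qq e)) *\<^sub>R vr (zz e))" .
  qed
qed

lemma covering: "\<exists>R\<ge>0. \<forall>u\<in>L. \<exists>l::int^'n. vr l \<in> L \<and> norm (u - vr l) \<le> R"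
proof -
  obtain zz :: "real ^ 'n \<Rightarrow> int ^ 'n" and qq where Z: "\<forall>u\<in>L.
     (\<forall>e\<in>Basis. vr (zz e) \<in> L \<and> qq e > 0) \<and> u = (\<Sum>e\<in>Basis. ((u \<bullet> e) / real (qq e)) *\<^sub>R vr (zz e))"
    using L_gen_int by blast
  have zzL: "vr (zz e) \<in> L" if "e \<in> Basis" for e using Z that L_subspace subspace_0 by blast
  define R where "R = (\<Sum>e\<in>Basis. norm (vr (zz e)))"
  have "\<exists>l::int^'n. vr l \<in> L \<and> norm (u - vr l) \<le> R" if u: "u \<in> L" for u
  proof -
    define c where "c e = (u \<bullet> e) / real (qq e)" for e
    define l where "l = (\<Sum>e\<in>Basis. \<lfloor>c e\<rfloor> *s zz e)"
    have vrl: "vr l = (\<Sum>e\<in>Basis. real_of_int \<lfloor>c e\<rfloor> *\<^sub>R vr (zz e))"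
      unfolding l_def vr_sum by (simp add: vr_def vec_eq_iff)
    have "vr l \<in> L" unfolding vrl using zzL L_subspace
      by (intro subspace_sum) (auto simp: subspace_scale)
    have eq: "u - vr l = (\<Sum>e\<in>Basis. (c e - \<lfloor>c e\<rfloor>) *\<^sub>R vr (zz e))"
      using Z u unfolding vrl c_def by (simp add: sum_subtractf scaleR_diff_left)
    have "norm (u - vr l) \<le> (\<Sum>e\<in>Basis. norm ((c e - \<lfloor>c e\<rfloor>) *\<^sub>R vr (zz e)))"
      unfolding eq by (rule norm_sum)
    also have "\<dots> \<le> R" unfolding R_def
    proof (rule sum_mono)
      fix e :: "real ^ 'n" assume "e \<in> Basis"
      have "\<bar>c e - \<lfloor>c e\<rfloor>\<bar> \<le> 1" by linarith
      thus "norm ((c e - \<lfloor>c e\<rfloor>) *\<^sub>R vr (zz e)) \<le> norm (vr (zz e))"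
        by (simp add: mult_left_le_one_le)
    qed
    finally show ?thesis using \<open>vr l \<in> L\<close> by blast
  qed
  moreover have "R \<ge> 0" unfolding R_def by (intro sum_nonneg) auto
  ultimately show ?thesis by blast
qed

end

lemma ln_fact_Suc: "ln (fact (Suc n) :: real) = ln (real (Suc n)) + ln (fact n)"
proof -
  have "(fact (Suc n) :: real) = real (Suc n) * fact n" by (simp add: fact_Suc)
  moreover have "(fact n :: real) > 0" by simp
  ultimately show ?thesis by (simp add: ln_mult del: of_nat_Suc)
qed

lemma stirA_core:
  assumes lam: "lam > 0" and M: "M \<le> lam / 2" and T0T: "T0 \<le> T"
    and rng: "\<And>j. T0 < j \<Longrightarrow> j \<le> T \<Longrightarrow> \<bar>real j - lam\<bar> \<le> M"
  shows "\<bar>ln (fact T) - ln (fact T0) - (real T - real T0) * ln lam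
          - ((real T - lam)^2 - (real T0 - lam)^2) / (2 * lam) - (real T - real T0) / (2 * lam)\<bar>
         \<le> (real T - real T0) * (2 * M^2 / lam^2)"
  using T0T rng
proof (induction T rule: dec_induct)
  case base thus ?case by simp
next
  case (step T)
  define D where "D T = ln (fact T) - ln (fact T0) - (real T - real T0) * ln lam
          - ((real T - lam)^2 - (real T0 - lam)^2) / (2 * lam) - (real T - real T0) / (2 * lam)" for T
  define y where "y = (real T + 1 - lam) / lam"
  have IH: "\<bar>D T\<bar> \<le> (real T - real T0) * (2 * M^2 / lam^2)"
    using step.IH step.prems unfolding D_def by simp
  have "\<bar>real T + 1 - lam\<bar> \<le> M" using step.prems[of "Suc T"] step.hyps by simp
  hence yb: "\<bar>y\<bar> \<le> M / lam" using lam unfolding y_def abs_divide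
    by (simp add: divide_right_mono)
  have Mlam: "M / lam \<le> 1/2" using M lam by (simp add: divide_le_eq)
  have "1 + y = real (Suc T) / lam" using lam by (simp add: y_def field_simps)
  hence lnS: "ln (real (Suc T)) - ln lam = ln (1 + y)" using lam by (simp add: ln_div del: of_nat_Suc)
  have "D (Suc T) = D T + (ln (real (Suc T)) - ln lam - y)"
    unfolding D_def y_def ln_fact_Suc using lam
    by (simp add: field_simps power2_eq_square) 
  also have "\<dots> = D T + (ln (1 + y) - y)" using lnS by simp
  finally have DS: "D (Suc T) = D T + (ln (1 + y) - y)" .
  have "\<bar>y\<bar> \<le> 1/2" using yb Mlam by linarith
  hence "\<bar>ln (1 + y) - y\<bar> \<le> 2 * y^2" by (intro abs_ln_one_plus_x_minus_x_bound)
  also have "\<dots> \<le> 2 * (M / lam)^2" using power_mono[of "\<bar>y\<bar>" "M/lam" 2] yb by simp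
  finally have "\<bar>ln (1 + y) - y\<bar> \<le> 2 * M^2 / lam^2" by (simp add: power_divide)
  hence "\<bar>D (Suc T)\<bar> \<le> (real T - real T0) * (2 * M^2 / lam^2) + 2 * M^2 / lam^2"
    using IH DS by linarith
  moreover have "(real (Suc T) - real T0) * (2 * M^2 / lam^2) = (real T - real T0) * (2 * M^2 / lam^2) + 2 * M^2 / lam^2"
    by (simp add: algebra_simps add_divide_distrib diff_divide_distrib)
  ultimately have "\<bar>D (Suc T)\<bar> \<le> (real (Suc T) - real T0) * (2 * M^2 / lam^2)" by linarith
  thus ?case by (simp only: D_def)
qed

lemma stirA_ord:
  assumes lam: "lam > 0" and M: "M \<le> lam / 2" and T0T: "T0 \<le> T"
    and b1: "\<bar>real T - lam\<bar> \<le> M" and b2: "\<bar>real T0 - lam\<bar> \<le> M"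
  shows "\<bar>ln (fact T) - ln (fact T0) - (real T - real T0) * ln lam
          - ((real T - lam)^2 - (real T0 - lam)^2) / (2 * lam)\<bar> \<le> M / lam + 4 * M^3 / lam^2"
proof -
  have rng: "\<bar>real j - lam\<bar> \<le> M" if "T0 < j" "j \<le> T" for j
  proof -
    have "real T0 \<le> real j" "real j \<le> real T" using that by auto
    thus ?thesis using b1 b2 by linarith
  qed
  have core: "\<bar>ln (fact T) - ln (fact T0) - (real T - real T0) * ln lam
          - ((real T - lam)^2 - (real T0 - lam)^2) / (2 * lam) - (real T - real T0) / (2 * lam)\<bar>
         \<le> (real T - real T0) * (2 * M^2 / lam^2)"
    by (rule stirA_core[OF lam M T0T rng])
  have d: "0 \<le> real T - real T0" "real T - real T0 \<le> 2 * M" using T0T b1 b2 by linarith+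
  have M0: "M \<ge> 0" using b1 by linarith
  have "(real T - real T0) / (2 * lam) \<le> 2 * M / (2 * lam)" using d lam by (intro divide_right_mono) auto
  also have "\<dots> = M / lam" by simp
  finally have e1: "\<bar>(real T - real T0) / (2 * lam)\<bar> \<le> M / lam" using d lam by simp
  have "(real T - real T0) * (2 * M^2 / lam^2) \<le> (2 * M) * (2 * M^2 / lam^2)"
    using d by (intro mult_right_mono) auto
  also have "\<dots> = 4 * M^3 / lam^2" by (simp add: power2_eq_square power3_eq_cube)
  finally have e2: "(real T - real T0) * (2 * M^2 / lam^2) \<le> 4 * M^3 / lam^2" .
  show ?thesis using core e1 e2 by linarith
qed

lemma stirA:
  assumes lam: "lam > 0" and M: "M \<le> lam / 2"
    and b1: "\<bar>real T - lam\<bar> \<le> M" and b2: "\<bar>real T0 - lam\<bar> \<le> M"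
  shows "\<bar>ln (fact T) - ln (fact T0) - (real T - real T0) * ln lam
          - ((real T - lam)^2 - (real T0 - lam)^2) / (2 * lam)\<bar> \<le> M / lam + 4 * M^3 / lam^2"
proof (cases "T0 \<le> T")
  case True thus ?thesis using stirA_ord[OF lam M True b1 b2] by simp
next
  case False
  hence "T \<le> T0" by simp
  have X: "\<bar>ln (fact T0) - ln (fact T) - (real T0 - real T) * ln lam
          - ((real T0 - lam)^2 - (real T - lam)^2) / (2 * lam)\<bar> \<le> M / lam + 4 * M^3 / lam^2"
    by (rule stirA_ord[OF lam M \<open>T \<le> T0\<close> b2 b1])
  have "ln (fact T0) - ln (fact T) - (real T0 - real T) * ln lam
          - ((real T0 - lam)^2 - (real T - lam)^2) / (2 * lam) = 
        - (ln (fact T) - ln (fact T0) - (real T - real T0) * ln lam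
          - ((real T - lam)^2 - (real T0 - lam)^2) / (2 * lam))"
    by (simp add: diff_divide_distrib algebra_simps)
  with X show ?thesis by (simp only: abs_minus_cancel)
qed

lemma ln_ge_one_minus_inv: "(x::real) > 0 \<Longrightarrow> ln x \<ge> 1 - 1 / x"
  using ln_le_minus_one[of "1/x"] by (simp add: ln_div)

lemma stirB_up:
  assumes T0: "T0 \<ge> 1" and N: "T0 + s \<le> N"
  shows "ln (fact (T0 + s)) - ln (fact T0) \<ge> real s * ln (real T0) + real s * (real s + 1) / (2 * real N)"
  using N
proof (induction s)
  case 0 thus ?case by simp
next
  case (Suc s)
  have IH: "ln (fact (T0 + s)) - ln (fact T0) \<ge> real s * ln (real T0) + real s * (real s + 1) / (2 * real N)"
    using Suc by simp
  have pos: "real T0 > 0" "real (T0 + Suc s) > 0" "real N > 0" using T0 Suc.prems by auto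
  have "ln (real (T0 + Suc s) / real T0) \<ge> 1 - real T0 / real (T0 + Suc s)"
    using ln_ge_one_minus_inv[of "real (T0 + Suc s) / real T0"] pos by simp
  also have "1 - real T0 / real (T0 + Suc s) = real (Suc s) / real (T0 + Suc s)"
    using pos by (simp add: field_simps)
  also have "real (Suc s) / real (T0 + Suc s) \<ge> real (Suc s) / real N"
    using pos Suc.prems by (intro divide_left_mono) auto
  finally have st: "ln (real (T0 + Suc s)) \<ge> ln (real T0) + real (Suc s) / real N"
    using pos by (simp add: ln_div)
  have "ln (fact (T0 + Suc s)) = ln (real (T0 + Suc s)) + ln (fact (T0 + s))"
    using ln_fact_Suc[of "T0 + s"] by simp
  moreover have "real s * (real s + 1) / (2 * real N) + real (Suc s) / real N
      = real (Suc s) * (real (Suc s) + 1) / (2 * real N)" using pos by (simp add: field_simps)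
  moreover have "real (Suc s) * ln (real T0) = real s * ln (real T0) + ln (real T0)" by (simp add: algebra_simps)
  ultimately show ?case using IH st by linarith
qed

lemma stirB_down:
  assumes T0: "T0 \<ge> 1" and s: "s \<le> T0"
  shows "ln (fact T0) - ln (fact (T0 - s)) \<le> real s * ln (real T0) - real s * (real s - 1) / (2 * real T0)"
  using s
proof (induction s)
  case 0 thus ?case by simp
next
  case (Suc s)
  have IH: "ln (fact T0) - ln (fact (T0 - s)) \<le> real s * ln (real T0) - real s * (real s - 1) / (2 * real T0)"
    using Suc by simp
  have pos: "real T0 > 0" "real (T0 - s) > 0" using T0 Suc.prems by auto
  have eq: "T0 - s = Suc (T0 - Suc s)" using Suc.prems by simp
  have "ln (fact (T0 - s)) = ln (real (T0 - s)) + ln (fact (T0 - Suc s))"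
    unfolding eq ln_fact_Suc by simp
  moreover have "ln (real (T0 - s) / real T0) \<le> real (T0 - s) / real T0 - 1"
    using pos by (intro ln_le_minus_one) auto
  hence "ln (real (T0 - s)) \<le> ln (real T0) - real s / real T0"
    using pos Suc.prems by (simp add: ln_div of_nat_diff field_simps)
  moreover have "real s * (real s - 1) / (2 * real T0) + real s / real T0
      = real (Suc s) * (real (Suc s) - 1) / (2 * real T0)" using pos by (simp add: field_simps)
  moreover have "real (Suc s) * ln (real T0) = real s * ln (real T0) + ln (real T0)" by (simp add: algebra_simps)
  ultimately show ?case using IH by linarith
qed

lemma stirB:
  assumes T0: "T0 \<ge> 1" "T0 \<le> N" and T: "T \<le> N"
  shows "ln (fact T) - ln (fact T0) \<ge> (real T - real T0) * ln (real T0)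
           + ((real T - real T0)^2 - \<bar>real T - real T0\<bar>) / (2 * real N)"
proof (cases "T0 \<le> T")
  case True
  define s where "s = T - T0"
  have Ts: "T = T0 + s" using True by (simp add: s_def)
  have Np: "real N > 0" using T0 by auto
  have "ln (fact T) - ln (fact T0) \<ge> real s * ln (real T0) + real s * (real s + 1) / (2 * real N)"
    unfolding Ts by (rule stirB_up) (use T0 T Ts in auto)
  moreover have "real s * (real s + 1) / (2 * real N) \<ge> ((real s)^2 - real s) / (2 * real N)"
    using Np by (intro divide_right_mono) (auto simp: power2_eq_square algebra_simps)
  moreover have "real T - real T0 = real s" using Ts by simp
  ultimately show ?thesis by simp
next
  case False
  define s where "s = T0 - T"
  have Ts: "T = T0 - s" "s \<le> T0" using False by (auto simp: s_def)
  have Np: "real N > 0" "real T0 > 0" using T0 by auto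
  have "ln (fact T0) - ln (fact T) \<le> real s * ln (real T0) - real s * (real s - 1) / (2 * real T0)"
    unfolding Ts by (rule stirB_down) (use T0 Ts in auto)
  moreover have "real s * (real s - 1) / (2 * real T0) \<ge> real s * (real s - 1) / (2 * real N)"
  proof (rule divide_left_mono)
    show "0 \<le> real s * (real s - 1)" using False by (auto simp: s_def)
  qed (use Np T0 in auto)
  moreover have C: "real T - real T0 = - real s" using Ts by (simp add: of_nat_diff)
  moreover have D: "((- real s)^2 - \<bar>- real s\<bar>) = real s * (real s - 1)" by (simp add: power2_eq_square algebra_simps)
  moreover have "(- real s) * ln (real T0) = - (real s * ln (real T0))" by simp
  ultimately show ?thesis unfolding C D by linarith
qed


definition ibox :: "nat \<Rightarrow> (int ^ 'n::finite) set" where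
  "ibox M = {z. \<forall>j. \<bar>z $ j\<bar> \<le> int M}"

lemma ibox_image: "ibox M = (\<lambda>f. \<chi> j. f j) ` (\<Pi>\<^sub>E j\<in>UNIV. {- int M..int M})"
proof
  show "ibox M \<subseteq> (\<lambda>f. \<chi> j. f j) ` (\<Pi>\<^sub>E j\<in>UNIV. {- int M..int M})"
  proof
    fix z assume "z \<in> ibox M"
    hence "(\<lambda>j. z $ j) \<in> (\<Pi>\<^sub>E j\<in>UNIV. {- int M..int M})" by (auto simp: ibox_def abs_le_iff minus_le_iff)
    moreover have "z = (\<chi> j. (\<lambda>j. z $ j) j)" by simp
    ultimately show "z \<in> (\<lambda>f. \<chi> j. f j) ` (\<Pi>\<^sub>E j\<in>UNIV. {- int M..int M})" by blast
  qed
  show "(\<lambda>f. \<chi> j. f j) ` (\<Pi>\<^sub>E j\<in>UNIV. {- int M..int M}) \<subseteq> ibox M"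
    by (auto simp: ibox_def abs_le_iff PiE_def Pi_iff minus_le_iff)
qed

lemma ibox_finite: "finite (ibox M :: (int ^ 'n::finite) set)"
  unfolding ibox_image by (intro finite_imageI finite_PiE) auto

lemma ibox_card: "card (ibox M :: (int ^ 'n::finite) set) \<le> (2 * M + 1) ^ CARD('n)"
proof -
  have "card (ibox M :: (int ^ 'n) set) \<le> card (\<Pi>\<^sub>E j\<in>(UNIV::'n set). {- int M..int M})"
    unfolding ibox_image by (intro card_image_le finite_PiE) auto
  also have "\<dots> = (2 * M + 1) ^ CARD('n)"
  proof -
    have "nat (2 * int M + 1) = Suc (2 * M)" by (simp add: nat_eq_iff)
    thus ?thesis by (simp add: card_PiE)
  qed
  finally show ?thesis .
qed

context lsetup begin

abbreviation Z :: "nat \<Rightarrow> (int ^ 'n) set" where "Z k \<equiv> latt_kP r v a k"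
definition xz :: "nat \<Rightarrow> int ^ 'n \<Rightarrow> real ^ 'n" where
  "xz k z = (1 / sqrt (real k)) *\<^sub>R (vr z - real k *\<^sub>R m)"
definition TT :: "nat \<Rightarrow> nat \<Rightarrow> int ^ 'n \<Rightarrow> int" where
  "TT k i z = iinner (v i) z + int k * a i"
definition Sp :: "real \<Rightarrow> nat \<Rightarrow> (int ^ 'n) set" where
  "Sp c k = {z. xz k z \<in> L \<and> norm (xz k z) < real k powr c}"

lemma TT_real: "real_of_int (TT k i z) = real k * tt i m + inner (vr (v i)) (vr z - real k *\<^sub>R m)"
  by (simp add: TT_def iinner_vr tt_def inner_diff_right algebra_simps)

lemma TT_scale: "k > 0 \<Longrightarrow> real_of_int (TT k i z) = real k * tt i ((1 / real k) *\<^sub>R vr z)"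
  by (simp add: TT_def iinner_vr tt_def algebra_simps)

lemma Z_iff: assumes "k > 0" shows "z \<in> Z k \<longleftrightarrow> (1 / real k) *\<^sub>R vr z \<in> P"
proof
  assume "z \<in> Z k"
  then obtain y where "y \<in> P" "vr z = real k *\<^sub>R y" by (auto simp: latt_kP_def)
  thus "(1 / real k) *\<^sub>R vr z \<in> P" using assms by simp
next
  assume "(1 / real k) *\<^sub>R vr z \<in> P"
  moreover have "vr z = real k *\<^sub>R ((1 / real k) *\<^sub>R vr z)" using assms by simp
  ultimately show "z \<in> Z k" unfolding latt_kP_def by blast
qed

lemma Z_TT: assumes "k > 0" shows "z \<in> Z k \<longleftrightarrow> (\<forall>i<r. TT k i z \<ge> 0)"
proof -
  have "(\<forall>i<r. TT k i z \<ge> 0) \<longleftrightarrow> (\<forall>i<r. real_of_int (TT k i z) \<ge> 0)" by simp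
  also have "\<dots> \<longleftrightarrow> (\<forall>i<r. tt i ((1 / real k) *\<^sub>R vr z) \<ge> 0)"
    using assms by (simp add: TT_scale zero_le_mult_iff)
  finally show ?thesis using Z_iff[OF assms] inP by simp
qed

lemma Z_L: assumes "k > 0" "z \<in> Z k" shows "vr z - real k *\<^sub>R m \<in> L"
proof -
  have "(1 / real k) *\<^sub>R vr z \<in> P" using Z_iff[OF assms(1)] assms(2) by simp
  hence "(1 / real k) *\<^sub>R vr z - m \<in> L" using P_diff_L m_props(1) by simp
  hence "real k *\<^sub>R ((1 / real k) *\<^sub>R vr z - m) \<in> L" using L_subspace by (simp add: subspace_scale)
  thus ?thesis using assms by (simp add: scaleR_diff_right)
qed

lemma Z_notI: assumes "k > 0" "z \<in> Z k" "i < r" "i \<notin> I" shows "TT k i z = 0"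
proof -
  have "(1 / real k) *\<^sub>R vr z \<in> P" using Z_iff[OF assms(1)] assms(2) by simp
  hence "tt i ((1 / real k) *\<^sub>R vr z) = 0" using notI_zero[OF assms(3,4)] by simp
  hence "real_of_int (TT k i z) = 0" using TT_scale[OF assms(1)] by simp
  thus ?thesis by simp
qed

lemma xz_L: "k > 0 \<Longrightarrow> z \<in> Z k \<Longrightarrow> xz k z \<in> L"
  unfolding xz_def using Z_L L_subspace by (simp add: subspace_scale)

lemma xz_inj: "k > 0 \<Longrightarrow> inj_on (xz k) S"
  by (auto simp: inj_on_def xz_def vr_inj)

lemma vr_xz: "k > 0 \<Longrightarrow> vr z - real k *\<^sub>R m = sqrt (real k) *\<^sub>R xz k z"
  by (simp add: xz_def)

lemma P_box: "\<exists>B\<ge>0. \<forall>y\<in>P. norm y \<le> B"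
proof -
  obtain B where B: "\<forall>y\<in>P. norm y \<le> B" using P_bounded unfolding bounded_iff by auto
  obtain y where "y \<in> P" using P_ne by auto
  hence "B \<ge> 0" using B norm_ge_zero order_trans by blast
  thus ?thesis using B by blast
qed

lemma Z_box: assumes B: "\<forall>y\<in>P. norm y \<le> B" "B \<ge> 0" and k: "k > 0"
  shows "Z k \<subseteq> ibox (nat \<lceil>real k * B\<rceil>)"
proof
  fix z assume z: "z \<in> Z k"
  have "norm ((1 / real k) *\<^sub>R vr z) \<le> B" using Z_iff[OF k] z B by blast
  hence nz: "norm (vr z) \<le> real k * B" using k by (simp add: field_simps)
  show "z \<in> ibox (nat \<lceil>real k * B\<rceil>)" unfolding ibox_def
  proof (intro CollectI allI)
    fix j
    have "\<bar>real_of_int (z $ j)\<bar> \<le> real k * B" using component_le_norm_cart[of "vr z" j] nz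
      by (simp add: vr_comp)
    hence "\<bar>z $ j\<bar> \<le> \<lceil>real k * B\<rceil>" by linarith
    thus "\<bar>z $ j\<bar> \<le> int (nat \<lceil>real k * B\<rceil>)" by linarith
  qed
qed

lemma Z_finite: "finite (Z k)"
proof (cases "k = 0")
  case True
  have "Z 0 \<subseteq> {0}"
  proof
    fix z assume "z \<in> Z 0"
    hence "vr z = 0" by (auto simp: latt_kP_def)
    hence "vr z = vr 0" by simp
    thus "z \<in> {0}" by (simp only: vr_inj) simp
  qed
  thus ?thesis using True finite_subset by blast
next
  case False
  obtain B where "B \<ge> 0" "\<forall>y\<in>P. norm y \<le> B" using P_box by auto
  hence "Z k \<subseteq> ibox (nat \<lceil>real k * B\<rceil>)" using Z_box False by simp
  thus ?thesis using ibox_finite finite_subset by metis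
qed

lemma near_Z: assumes k: "k > 0" and d: "\<delta> > 0" "\<forall>u\<in>Lp. norm u \<le> \<delta> \<longrightarrow> m + u \<in> P"
  and w: "vr z - real k *\<^sub>R m \<in> L" "norm (vr z - real k *\<^sub>R m) \<le> real k * \<delta>"
  shows "z \<in> Z k"
proof -
  define u where "u = (1 / real k) *\<^sub>R (vr z - real k *\<^sub>R m)"
  have "u \<in> Lp" using w L_subspace L_eq by (simp add: u_def subspace_scale)
  moreover have "norm u = norm (vr z - real k *\<^sub>R m) / real k" by (simp add: u_def)
  hence "norm u \<le> \<delta>" using w k by (simp add: divide_le_eq mult.commute)
  ultimately have "m + u \<in> P" using d by blast
  moreover have "m + u = (1 / real k) *\<^sub>R vr z" using k by (simp add: u_def scaleR_diff_right)
  ultimately show ?thesis using Z_iff[OF k] by simp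
qed

lemma rho_supp_eq: "k > 0 \<Longrightarrow> rho_supp r v a c k = xz k ` Sp c k"
  unfolding rho_supp_def Sp_def xz_def by auto

end

lemma ev_small: assumes "e < 0" "\<delta> > 0" shows "eventually (\<lambda>k. real k powr e < \<delta>) sequentially"
proof -
  have "((\<lambda>k. real k powr e) \<longlongrightarrow> 0) sequentially"
    by (rule tendsto_neg_powr[OF assms(1) filterlim_real_sequentially])
  thus ?thesis using assms(2) by (rule order_tendstoD(2))
qed

lemma ev_large: assumes "e > 0" shows "eventually (\<lambda>k. real k powr e \<ge> B) sequentially"
proof -
  have "filterlim (\<lambda>k. real k powr e) at_top sequentially"
    by (rule filterlim_compose[OF real_powr_at_top[OF assms] filterlim_real_sequentially])
  thus ?thesis by (simp add: filterlim_at_top)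
qed

lemma sqrt_pow_eq: "k > 0 \<Longrightarrow> sqrt (real k) * real k powr c = real k * real k powr (c - 1/2)"
proof -
  have 1: "real k * real k powr (c - 1/2) = real k powr (1 + (c - 1/2))" by (rule powr_mult_base) simp
  have 2: "real k powr (1 + (c - 1/2)) = real k powr (1/2) * real k powr c"
    by (subst powr_add[symmetric]) (simp add: algebra_simps)
  have 3: "real k powr (1/2) = sqrt (real k)" by (rule powr_half_sqrt) simp
  show ?thesis using 1 2 3 by simp
qed

context lsetup begin

definition Nk :: "nat \<Rightarrow> nat" where "Nk k = nat (int k * (\<Sum>i<r. a i))"

lemma TT_x: "k > 0 \<Longrightarrow> real_of_int (TT k i z) = real k * tt i m + sqrt (real k) * inner (vr (v i)) (xz k z)"
  using TT_real[of k i z] vr_xz[of k z] by (simp add: inner_scaleR_right)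

lemma sum_TT: "(\<Sum>i<r. TT k i z) = int k * (\<Sum>i<r. a i)"
proof -
  have "real_of_int (\<Sum>i<r. TT k i z) = (\<Sum>i<r. real k * tt i m + inner (vr (v i)) (vr z - real k *\<^sub>R m))"
    by (simp add: TT_real)
  also have "\<dots> = real k * (\<Sum>i<r. tt i m) + (\<Sum>i<r. inner (vr (v i)) (vr z - real k *\<^sub>R m))"
    by (simp add: sum.distrib sum_distrib_left)
  also have "\<dots> = real k * AA" by (simp add: sum_tt sum_inner_v)
  also have "\<dots> = real_of_int (int k * (\<Sum>i<r. a i))" by (simp add: AA_def)
  finally show ?thesis by (simp only: of_int_eq_iff)
qed

lemma TT_le_N: assumes "k > 0" "z \<in> Z k" "i < r" shows "TT k i z \<le> int k * (\<Sum>i<r. a i)"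
proof -
  have "TT k i z \<le> (\<Sum>i<r. TT k i z)"
    using assms Z_TT by (intro member_le_sum) auto
  thus ?thesis by (simp add: sum_TT)
qed

lemma wt_ln: assumes k: "k > 0" and z: "z \<in> Z k"
  shows "wt r v a k z > 0" "ln (wt r v a k z) = ln (fact (Nk k)) - (\<Sum>i\<in>I. ln (fact (nat (TT k i z))))"
proof -
  have pr: "(\<Prod>i<r. fact (nat (TT k i z)) :: real) = (\<Prod>i\<in>I. fact (nat (TT k i z)))"
    by (rule prod.mono_neutral_right) (use I_sub Z_notI[OF k z] in auto)
  have w: "wt r v a k z = fact (Nk k) / (\<Prod>i\<in>I. fact (nat (TT k i z)))"
    unfolding wt_def multinom_def Nk_def TT_def[symmetric] pr[symmetric] by simp
  have pp: "(\<Prod>i\<in>I. fact (nat (TT k i z)) :: real) > 0" by (intro prod_pos) auto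
  show "wt r v a k z > 0" unfolding w using pp by simp
  show "ln (wt r v a k z) = ln (fact (Nk k)) - (\<Sum>i\<in>I. ln (fact (nat (TT k i z))))"
    unfolding w using pp I_fin by (simp add: ln_div ln_prod)
qed

lemma ln_gauss: "ln (gauss_wt r v a x) = - (1/2) * (\<Sum>i\<in>I. (inner (vr (v i)) x)^2 / tt i m)"
  by (simp add: gauss_wt_def tt_def)

lemma Sp_sub_Z: assumes "c < 1/2" shows "eventually (\<lambda>k. Sp c k \<subseteq> Z k) sequentially"
proof -
  obtain \<delta> where d: "\<delta> > 0" "\<forall>u\<in>Lp. norm u \<le> \<delta> \<longrightarrow> m + u \<in> P" using near_m by auto
  have "eventually (\<lambda>k. real k powr (c - 1/2) < \<delta>) sequentially" using assms d by (intro ev_small) auto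
  moreover have "eventually (\<lambda>k. k > 0) sequentially" by (rule eventually_gt_at_top)
  ultimately show ?thesis
  proof eventually_elim
    case (elim k)
    show ?case
    proof
      fix z assume z: "z \<in> Sp c k"
      have w: "vr z - real k *\<^sub>R m = sqrt (real k) *\<^sub>R xz k z" using vr_xz elim by simp
      have "xz k z \<in> L" using z by (simp add: Sp_def)
      hence wL: "vr z - real k *\<^sub>R m \<in> L" unfolding w using L_subspace by (simp add: subspace_scale)
      have "norm (vr z - real k *\<^sub>R m) = sqrt (real k) * norm (xz k z)" unfolding w by simp
      also have "\<dots> \<le> sqrt (real k) * real k powr c" using z by (intro mult_left_mono) (auto simp: Sp_def)
      also have "\<dots> = real k * real k powr (c - 1/2)"
        using elim by (simp add: sqrt_pow_eq)
      also have "\<dots> \<le> real k * \<delta>" using elim by (intro mult_left_mono) auto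
      finally show "z \<in> Z k" using near_Z[OF elim(2) d wL] by simp
    qed
  qed
qed

end

lemma pow3_eq: "k > 0 \<Longrightarrow> real k * (real k powr (c - 1/2))^3 = real k powr (3 * c - 1/2)"
proof -
  assume k: "k > 0"
  have "(real k powr (c - 1/2))^3 = real k powr (of_nat 3 * (c - 1/2))" using k by (subst powr_power) auto
  hence "real k * (real k powr (c - 1/2))^3 = real k powr (1 + 3 * (c - 1/2))"
    by (simp add: powr_mult_base)
  also have "1 + 3 * (c - 1/2) = 3 * c - 1/2" by simp
  finally show ?thesis .
qed

lemma mix: "0 \<le> (\<alpha>::real) \<Longrightarrow> 0 \<le> \<beta> \<Longrightarrow> 0 \<le> A \<Longrightarrow> 0 \<le> B \<Longrightarrow> \<alpha> * A + \<beta> * B \<le> (\<alpha> + \<beta>) * (A + B)"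
proof -
  assume h: "0 \<le> \<alpha>" "0 \<le> \<beta>" "0 \<le> A" "0 \<le> B"
  have "0 \<le> \<alpha> * B + \<beta> * A" using h by simp
  thus ?thesis by (simp add: algebra_simps)
qed

context lsetup begin

lemma abs_inner_le: "\<bar>inner (vr (v i)) x\<bar> \<le> norm (vr (v i)) * norm x"
  by (rule Cauchy_Schwarz_ineq2)

lemma per_i:
  assumes k: "k > 0" and i: "i \<in> I" and z: "z \<in> Z k" and z0: "z0 \<in> Z k"
    and nx: "norm (xz k z) \<le> real k powr c" and nx0: "norm (xz k z0) \<le> real k powr c"
    and small: "norm (vr (v i)) * real k powr (c - 1/2) \<le> tt i m / 2"
  shows "\<bar>ln (fact (nat (TT k i z))) - ln (fact (nat (TT k i z0)))
          - (real_of_int (TT k i z) - real_of_int (TT k i z0)) * ln (real k * tt i m)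
          - (real k * (inner (vr (v i)) (xz k z))^2 - real k * (inner (vr (v i)) (xz k z0))^2) / (2 * (real k * tt i m))\<bar>
         \<le> (norm (vr (v i)) / tt i m) * real k powr (c - 1/2)
            + (4 * norm (vr (v i))^3 / (tt i m)^2) * real k powr (3 * c - 1/2)"
proof -
  define \<nu> where "\<nu> = norm (vr (v i))"
  define \<tau> where "\<tau> = tt i m"
  define lam where "lam = real k * \<tau>"
  define e where "e = real k powr (c - 1/2)"
  define M where "M = \<nu> * (real k * e)"
  have tau: "\<tau> > 0" using m_relint i by (simp add: \<tau>_def)
  have lam: "lam > 0" using tau k by (simp add: lam_def)
  have nu: "\<nu> \<ge> 0" by (simp add: \<nu>_def)
  have ir: "i < r" using i I_sub by auto
  have TTnn: "TT k i z \<ge> 0" "TT k i z0 \<ge> 0" using Z_TT[OF k] z z0 ir by auto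
  have rT: "real (nat (TT k i z)) = real_of_int (TT k i z)" "real (nat (TT k i z0)) = real_of_int (TT k i z0)"
    using TTnn by auto
  have sk: "sqrt (real k) * real k powr c = real k * e" unfolding e_def by (rule sqrt_pow_eq[OF k])
  have bnd: "\<bar>real_of_int (TT k i y) - lam\<bar> \<le> M" if "norm (xz k y) \<le> real k powr c" for y
  proof -
    have "\<bar>real_of_int (TT k i y) - lam\<bar> = sqrt (real k) * \<bar>inner (vr (v i)) (xz k y)\<bar>"
      using TT_x[OF k, of i y] by (simp add: lam_def \<tau>_def abs_mult)
    also have "\<dots> \<le> sqrt (real k) * (\<nu> * norm (xz k y))"
      using abs_inner_le by (intro mult_left_mono) (auto simp: \<nu>_def)
    also have "\<dots> \<le> sqrt (real k) * (\<nu> * real k powr c)"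
      using that nu by (intro mult_left_mono) auto
    also have "\<dots> = M" using sk by (simp add: M_def)
    finally show ?thesis .
  qed
  have Mlam: "M \<le> lam / 2"
  proof -
    have "M = real k * (\<nu> * e)" by (simp add: M_def)
    also have "\<dots> \<le> real k * (\<tau> / 2)" using small by (intro mult_left_mono) (auto simp: \<nu>_def e_def \<tau>_def)
    finally show ?thesis by (simp add: lam_def)
  qed
  have A: "\<bar>ln (fact (nat (TT k i z))) - ln (fact (nat (TT k i z0))) - (real (nat (TT k i z)) - real (nat (TT k i z0))) * ln lam
          - ((real (nat (TT k i z)) - lam)^2 - (real (nat (TT k i z0)) - lam)^2) / (2 * lam)\<bar> \<le> M / lam + 4 * M^3 / lam^2"
    by (rule stirA[OF lam Mlam]) (use bnd nx nx0 rT in auto)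
  have sq: "(real_of_int (TT k i y) - lam)^2 = real k * (inner (vr (v i)) (xz k y))^2" for y
    using TT_x[OF k, of i y] k by (simp add: lam_def \<tau>_def power_mult_distrib)
  have e1: "M / lam = (\<nu> / \<tau>) * e" using k tau by (simp add: M_def lam_def)
  have e2: "4 * M^3 / lam^2 = (4 * \<nu>^3 / \<tau>^2) * (real k * e^3)"
    using k tau by (simp add: M_def lam_def power_mult_distrib power2_eq_square power3_eq_cube)
  have e3: "real k * e^3 = real k powr (3 * c - 1/2)" unfolding e_def by (rule pow3_eq[OF k])
  show ?thesis
    using A unfolding rT sq e1 e2 e3 by (simp add: lam_def \<tau>_def \<nu>_def e_def)
qed

definition Cme :: real where
  "Cme = (\<Sum>i\<in>I. norm (vr (v i)) / tt i m + 4 * norm (vr (v i))^3 / (tt i m)^2)"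

lemma Cme_nonneg: "Cme \<ge> 0"
  unfolding Cme_def
proof (intro sum_nonneg)
  fix i assume i: "i \<in> I"
  have "tt i m > 0" using m_relint[OF i] .
  thus "0 \<le> norm (vr (v i)) / tt i m + 4 * norm (vr (v i))^3 / (tt i m)^2" by simp
qed

lemma ev_small_all: assumes "c < 1/2"
  shows "eventually (\<lambda>k. \<forall>i\<in>I. norm (vr (v i)) * real k powr (c - 1/2) \<le> tt i m / 2) sequentially"
proof (rule eventually_ball_finite[OF I_fin], intro ballI)
  fix i assume i: "i \<in> I"
  have tau: "tt i m > 0" using m_relint i by simp
  have "eventually (\<lambda>k. real k powr (c - 1/2) < tt i m / 2 / (norm (vr (v i)) + 1)) sequentially"
    using assms tau by (intro ev_small) (auto intro!: divide_pos_pos add_nonneg_pos)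
  thus "eventually (\<lambda>k. norm (vr (v i)) * real k powr (c - 1/2) \<le> tt i m / 2) sequentially"
  proof eventually_elim
    case (elim k)
    have p: "real k powr (c - 1/2) \<ge> 0" by simp
    have "norm (vr (v i)) * real k powr (c - 1/2) \<le> (norm (vr (v i)) + 1) * real k powr (c - 1/2)"
      using p by (intro mult_right_mono) auto
    also have "\<dots> \<le> tt i m / 2"
    proof -
      have pn: "norm (vr (v i)) + 1 > 0" by (simp add: add_nonneg_pos)
      have "real k powr (c - 1/2) * (norm (vr (v i)) + 1) < tt i m / 2"
        using elim pos_less_divide_eq[OF pn] by blast
      thus ?thesis by (simp add: mult.commute)
    qed
    finally show ?case .
  qed
qed

lemma main_est:
  assumes c: "0 < c" "c < 1/6"
  shows "eventually (\<lambda>k. \<forall>z\<in>Sp c k. \<forall>z0\<in>Sp c k.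
     \<bar>ln (wt r v a k z) - ln (wt r v a k z0) - (ln (gauss_wt r v a (xz k z)) - ln (gauss_wt r v a (xz k z0)))\<bar>
       \<le> Cme * (real k powr (c - 1/2) + real k powr (3*c - 1/2))) sequentially"
proof -
  have c2: "c < 1/2" using c by simp
  have ev: "eventually (\<lambda>k. k > 0 \<and> Sp c k \<subseteq> Z k \<and> (\<forall>i\<in>I. norm (vr (v i)) * real k powr (c - 1/2) \<le> tt i m / 2)) sequentially"
    using eventually_gt_at_top[of 0] Sp_sub_Z[OF c2] ev_small_all[OF c2] by eventually_elim auto
  show ?thesis using ev
  proof eventually_elim
    case (elim k)
    hence k: "k > 0" and sub: "Sp c k \<subseteq> Z k" and sm: "\<forall>i\<in>I. norm (vr (v i)) * real k powr (c - 1/2) \<le> tt i m / 2"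
      by auto
    show ?case
    proof (intro ballI)
      fix z z0 assume zS: "z \<in> Sp c k" and z0S: "z0 \<in> Sp c k"
      have z: "z \<in> Z k" and z0: "z0 \<in> Z k" using zS z0S sub by auto
      have nx: "norm (xz k z) \<le> real k powr c" "norm (xz k z0) \<le> real k powr c"
        using zS z0S by (auto simp: Sp_def)
      define x where "x = xz k z"
      define x0 where "x0 = xz k z0"
      define b where "b i y = inner (vr (v i)) y" for i y
      define E where "E i = ln (fact (nat (TT k i z))) - ln (fact (nat (TT k i z0)))
          - (real_of_int (TT k i z) - real_of_int (TT k i z0)) * ln (real k * tt i m)
          - (real k * (b i x)^2 - real k * (b i x0)^2) / (2 * (real k * tt i m))" for i
      have Eb: "\<bar>E i\<bar> \<le> (norm (vr (v i)) / tt i m) * real k powr (c - 1/2)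
            + (4 * norm (vr (v i))^3 / (tt i m)^2) * real k powr (3 * c - 1/2)" if "i \<in> I" for i
        unfolding E_def b_def x_def x0_def using per_i[OF k that z z0 nx] sm that by blast
      define w where "w = vr z - vr z0"
      have wL: "w \<in> L"
      proof -
        have "vr z - real k *\<^sub>R m \<in> L" "vr z0 - real k *\<^sub>R m \<in> L" using Z_L[OF k] z z0 by auto
        hence d: "(vr z - real k *\<^sub>R m) - (vr z0 - real k *\<^sub>R m) \<in> L" using subspace_diff[OF L_subspace] by blast
        have "(vr z - real k *\<^sub>R m) - (vr z0 - real k *\<^sub>R m) = w" by (simp add: w_def)
        thus ?thesis using d by simp
      qed
      have Tdiff: "real_of_int (TT k i z) - real_of_int (TT k i z0) = b i w" for i
        by (simp add: TT_real b_def w_def inner_diff_right)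
      have lin0: "(\<Sum>i\<in>I. (real_of_int (TT k i z) - real_of_int (TT k i z0)) * ln (real k * tt i m)) = 0"
      proof -
        have "(\<Sum>i\<in>I. (real_of_int (TT k i z) - real_of_int (TT k i z0)) * ln (real k * tt i m))
            = (\<Sum>i\<in>I. b i w * ln (real k) + b i w * ln (tt i m))"
        proof (rule sum.cong[OF refl])
          fix i assume i: "i \<in> I"
          have "tt i m > 0" using m_relint[OF i] .
          thus "(real_of_int (TT k i z) - real_of_int (TT k i z0)) * ln (real k * tt i m) = b i w * ln (real k) + b i w * ln (tt i m)"
            using k by (simp add: Tdiff ln_mult distrib_left)
        qed
        also have "\<dots> = (\<Sum>i\<in>I. b i w) * ln (real k) + (\<Sum>i\<in>I. b i w * ln (tt i m))"
          by (simp add: sum.distrib sum_distrib_right)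
        also have "\<dots> = 0" using sumI_inner[OF wL] foc[OF wL] by (simp add: b_def)
        finally show ?thesis .
      qed
      have quad: "(\<Sum>i\<in>I. (real k * (b i x)^2 - real k * (b i x0)^2) / (2 * (real k * tt i m)))
          = ln (gauss_wt r v a x0) - ln (gauss_wt r v a x)"
      proof -
        have "(\<Sum>i\<in>I. (real k * (b i x)^2 - real k * (b i x0)^2) / (2 * (real k * tt i m)))
            = (\<Sum>i\<in>I. (1/2) * ((b i x0)^2 / tt i m) * (-1) + (1/2) * ((b i x)^2 / tt i m))"
        proof (rule sum.cong[OF refl])
          fix i assume i: "i \<in> I"
          have "tt i m > 0" using m_relint[OF i] .
          thus "(real k * (b i x)^2 - real k * (b i x0)^2) / (2 * (real k * tt i m)) = (1/2) * ((b i x0)^2 / tt i m) * (-1) + (1/2) * ((b i x)^2 / tt i m)"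
            using k by (simp add: field_simps)
        qed
        also have "\<dots> = ln (gauss_wt r v a x0) - ln (gauss_wt r v a x)"
          unfolding ln_gauss b_def by (simp add: sum.distrib sum_distrib_left sum_negf sum_subtractf)
        finally show ?thesis .
      qed
      have lw: "ln (wt r v a k z) - ln (wt r v a k z0) = - (\<Sum>i\<in>I. ln (fact (nat (TT k i z))) - ln (fact (nat (TT k i z0))))"
        using wt_ln[OF k z] wt_ln[OF k z0] by (simp add: sum_subtractf)
      have decomp: "(\<Sum>i\<in>I. ln (fact (nat (TT k i z))) - ln (fact (nat (TT k i z0))))
          = (\<Sum>i\<in>I. (real_of_int (TT k i z) - real_of_int (TT k i z0)) * ln (real k * tt i m))
            + (\<Sum>i\<in>I. (real k * (b i x)^2 - real k * (b i x0)^2) / (2 * (real k * tt i m)))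
            + (\<Sum>i\<in>I. E i)"
        unfolding E_def by (simp add: sum.distrib[symmetric])
      have key: "ln (wt r v a k z) - ln (wt r v a k z0) - (ln (gauss_wt r v a x) - ln (gauss_wt r v a x0))
          = - (\<Sum>i\<in>I. E i)"
        using lw decomp lin0 quad by simp
      have "\<bar>\<Sum>i\<in>I. E i\<bar> \<le> (\<Sum>i\<in>I. \<bar>E i\<bar>)" by (rule sum_abs)
      also have "\<dots> \<le> (\<Sum>i\<in>I. (norm (vr (v i)) / tt i m) * real k powr (c - 1/2)
            + (4 * norm (vr (v i))^3 / (tt i m)^2) * real k powr (3 * c - 1/2))"
        by (intro sum_mono Eb)
      also have "\<dots> \<le> (\<Sum>i\<in>I. (norm (vr (v i)) / tt i m + 4 * norm (vr (v i))^3 / (tt i m)^2)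
                      * (real k powr (c - 1/2) + real k powr (3 * c - 1/2)))"
      proof (intro sum_mono)
        fix i assume i: "i \<in> I"
        have t: "tt i m > 0" using m_relint i by simp
        have a1: "0 \<le> norm (vr (v i)) / tt i m" "0 \<le> 4 * norm (vr (v i))^3 / (tt i m)^2" using t by auto
        have p1: "0 \<le> real k powr (c - 1/2)" "0 \<le> real k powr (3 * c - 1/2)" by auto
        show "(norm (vr (v i)) / tt i m) * real k powr (c - 1/2)
            + (4 * norm (vr (v i))^3 / (tt i m)^2) * real k powr (3 * c - 1/2)
           \<le> (norm (vr (v i)) / tt i m + 4 * norm (vr (v i))^3 / (tt i m)^2)
                      * (real k powr (c - 1/2) + real k powr (3 * c - 1/2))"
          by (rule mix[OF a1 p1])
      qed
      also have "\<dots> = Cme * (real k powr (c - 1/2) + real k powr (3 * c - 1/2))"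
        by (simp add: Cme_def sum_distrib_right)
      finally show "\<bar>ln (wt r v a k z) - ln (wt r v a k z0) - (ln (gauss_wt r v a (xz k z)) - ln (gauss_wt r v a (xz k z0)))\<bar>
       \<le> Cme * (real k powr (c - 1/2) + real k powr (3*c - 1/2))"
        using key by (simp add: x_def x0_def)
    qed
  qed
qed

end

lemma ln_diff_bound: assumes "(x::real) > 0" "y > 0" shows "\<bar>ln x - ln y\<bar> \<le> \<bar>x - y\<bar> / min x y"
proof (cases "x \<ge> y")
  case True
  have "ln x - ln y = ln (x / y)" using assms by (simp add: ln_div)
  also have "\<dots> \<le> x / y - 1" using assms by (intro ln_le_minus_one) auto
  also have "\<dots> = (x - y) / y" using assms by (simp add: field_simps)
  finally have "ln x - ln y \<le> (x - y) / y" .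
  moreover have "ln x - ln y \<ge> 0" using True assms by simp
  ultimately show ?thesis using True by (simp add: min_def)
next
  case False
  have "ln y - ln x = ln (y / x)" using assms by (simp add: ln_div)
  also have "\<dots> \<le> y / x - 1" using assms by (intro ln_le_minus_one) auto
  also have "\<dots> = (y - x) / x" using assms by (simp add: field_simps)
  finally have "ln y - ln x \<le> (y - x) / x" .
  moreover have "ln y - ln x \<ge> 0" using False assms by simp
  ultimately show ?thesis using False by (simp add: min_def abs_minus_commute)
qed

context lsetup begin

lemma real_Nk: "real (Nk k) = real k * AA"
proof -
  have "real_of_int (\<Sum>i<r. a i) \<ge> 0" using AA_nonneg unfolding AA_def .
  hence "(\<Sum>i<r. a i) \<ge> 0" by (simp only: of_int_0_le_iff)
  thus ?thesis by (simp add: Nk_def AA_def)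
qed

lemma tail_i:
  assumes k: "k > 0" and i: "i \<in> I" and z: "z \<in> Z k" and z0: "z0 \<in> Z k"
    and R: "norm (vr z0 - real k *\<^sub>R m) \<le> R"
    and big: "real k * tt i m \<ge> 2 * (norm (vr (v i)) * R + 1)"
  shows "ln (fact (nat (TT k i z))) - ln (fact (nat (TT k i z0)))
    \<ge> inner (vr (v i)) (vr z - vr z0) * ln (real k * tt i m)
       - \<bar>inner (vr (v i)) (vr z - vr z0)\<bar> * (2 * norm (vr (v i)) * R / (real k * tt i m))
       + ((inner (vr (v i)) (vr z - vr z0))^2 - \<bar>inner (vr (v i)) (vr z - vr z0)\<bar>) / (2 * (real k * AA))"
proof -
  define \<nu> where "\<nu> = norm (vr (v i))"
  define lam where "lam = real k * tt i m"
  define s where "s = inner (vr (v i)) (vr z - vr z0)"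
  have ir: "i < r" using i I_sub by auto
  have tau: "tt i m > 0" using m_relint i by simp
  have lam: "lam > 0" using k tau by (simp add: lam_def)
  have TTnn: "TT k i z \<ge> 0" "TT k i z0 \<ge> 0" using Z_TT[OF k] z z0 ir by auto
  have rT: "real (nat (TT k i z)) = real_of_int (TT k i z)" "real (nat (TT k i z0)) = real_of_int (TT k i z0)"
    using TTnn by auto
  have T0e: "real_of_int (TT k i z0) = lam + inner (vr (v i)) (vr z0 - real k *\<^sub>R m)"
    by (simp add: TT_real lam_def)
  have eb: "\<bar>inner (vr (v i)) (vr z0 - real k *\<^sub>R m)\<bar> \<le> \<nu> * R"
  proof -
    have "norm (vr (v i)) * norm (vr z0 - real k *\<^sub>R m) \<le> norm (vr (v i)) * R" using R by (intro mult_left_mono) auto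
    thus ?thesis using abs_inner_le[of i "vr z0 - real k *\<^sub>R m"] unfolding \<nu>_def by linarith
  qed
  have T0lo: "real_of_int (TT k i z0) \<ge> lam / 2 + 1" using T0e eb big by (simp add: lam_def \<nu>_def)
  have T0ge1: "nat (TT k i z0) \<ge> 1" using T0lo lam by linarith
  have sd: "real (nat (TT k i z)) - real (nat (TT k i z0)) = s"
    unfolding rT by (simp add: TT_real s_def inner_diff_right)
  have Nle: "nat (TT k i z) \<le> Nk k" "nat (TT k i z0) \<le> Nk k"
    using TT_le_N[OF k z ir] TT_le_N[OF k z0 ir] by (auto simp: Nk_def)
  have B: "ln (fact (nat (TT k i z))) - ln (fact (nat (TT k i z0)))
      \<ge> s * ln (real (nat (TT k i z0))) + (s^2 - \<bar>s\<bar>) / (2 * real (Nk k))"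
    using stirB[OF T0ge1 Nle(2) Nle(1)] unfolding sd .
  have lnb: "\<bar>ln (real (nat (TT k i z0))) - ln lam\<bar> \<le> 2 * \<nu> * R / lam"
  proof -
    have p: "real (nat (TT k i z0)) > 0" using T0ge1 by simp
    have "\<bar>ln (real (nat (TT k i z0))) - ln lam\<bar> \<le> \<bar>real (nat (TT k i z0)) - lam\<bar> / min (real (nat (TT k i z0))) lam"
      by (rule ln_diff_bound[OF p lam])
    also have "\<dots> \<le> (\<nu> * R) / (lam / 2)"
    proof (rule frac_le)
      show "\<bar>real (nat (TT k i z0)) - lam\<bar> \<le> \<nu> * R" using rT T0e eb by simp
      show "0 < lam / 2" using lam by simp
      show "lam / 2 \<le> min (real (nat (TT k i z0))) lam" using rT T0lo lam by simp
    qed (simp add: \<nu>_def R[THEN order_trans[OF norm_ge_zero]])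
    also have "\<dots> = 2 * \<nu> * R / lam" by simp
    finally show ?thesis .
  qed
  have "s * ln (real (nat (TT k i z0))) = s * ln lam + s * (ln (real (nat (TT k i z0))) - ln lam)"
    by (simp add: algebra_simps)
  moreover have "s * (ln (real (nat (TT k i z0))) - ln lam) \<ge> - (\<bar>s\<bar> * (2 * \<nu> * R / lam))"
  proof -
    have "\<bar>s * (ln (real (nat (TT k i z0))) - ln lam)\<bar> \<le> \<bar>s\<bar> * (2 * \<nu> * R / lam)"
      unfolding abs_mult by (intro mult_left_mono lnb) auto
    thus ?thesis by linarith
  qed
  ultimately show ?thesis using B unfolding real_Nk
    by (simp add: s_def lam_def \<nu>_def)
qed

lemma ev_real_ge: "eventually (\<lambda>k. real k \<ge> B) sequentially"
  using filterlim_real_sequentially by (simp add: filterlim_at_top)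

lemma sk_sq: "k > 0 \<Longrightarrow> (sqrt (real k) * real k powr c)^2 = real k * real k powr (2 * c)"
proof -
  assume k: "k > 0"
  have "(real k powr c)^2 = real k powr (of_nat 2 * c)" using k by (subst powr_power) auto
  thus ?thesis using k by (simp add: power_mult_distrib)
qed

lemma sk_pow: "k > 0 \<Longrightarrow> sqrt (real k) * real k powr c = real k powr (c + 1/2)"
  by (simp add: powr_half_sqrt[symmetric] powr_add[symmetric] add.commute)

lemma L_zero_if_noI: assumes "I = {}" "u \<in> L" shows "u = 0"
proof -
  obtain \<kappa> where k: "\<kappa> > 0" "\<forall>u\<in>L. QQ u \<ge> \<kappa> * (norm u)^2" using posdef by auto
  have "\<kappa> * (norm u)^2 \<le> 0" using k assms by (auto simp: QQ_def)
  hence "(norm u)^2 \<le> 0" using k by (simp add: mult_le_0_iff)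
  thus ?thesis by simp
qed

lemma tail_est:
  assumes c: "0 < c" "c < 1/2" and R: "R \<ge> 0"
  shows "\<exists>\<eta>>0. eventually (\<lambda>k. \<forall>z0\<in>Z k. \<forall>z\<in>Z k. norm (vr z0 - real k *\<^sub>R m) \<le> R \<longrightarrow>
     norm (xz k z) \<ge> real k powr c \<longrightarrow> ln (wt r v a k z) - ln (wt r v a k z0) \<le> - \<eta> * real k powr (2*c)) sequentially"
proof (cases "I = {}")
  case True
  have "eventually (\<lambda>k. \<forall>z0\<in>Z k. \<forall>z\<in>Z k. norm (vr z0 - real k *\<^sub>R m) \<le> R \<longrightarrow>
     norm (xz k z) \<ge> real k powr c \<longrightarrow> ln (wt r v a k z) - ln (wt r v a k z0) \<le> - 1 * real k powr (2*c)) sequentially"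
    using eventually_gt_at_top[of 0]
  proof eventually_elim
    case (elim k)
    show ?case
    proof (intro ballI impI)
      fix z0 z assume "z \<in> Z k" "norm (xz k z) \<ge> real k powr c"
      moreover have "xz k z = 0" using L_zero_if_noI[OF True] xz_L elim \<open>z \<in> Z k\<close> by blast
      moreover have "real k powr c > 0" using elim by simp
      ultimately show "ln (wt r v a k z) - ln (wt r v a k z0) \<le> - 1 * real k powr (2*c)" by simp
    qed
  qed
  thus ?thesis by (intro exI[of _ 1]) auto
next
  case False
  obtain \<kappa> where kap: "\<kappa> > 0" "\<forall>u\<in>L. QQ u \<ge> \<kappa> * (norm u)^2" using posdef by auto
  obtain i0 where i0: "i0 \<in> I" using False by auto
  have AA: "AA > 0"
  proof -
    have "tt i0 m \<le> (\<Sum>i<r. tt i m)"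
      using i0 I_sub m_props(1) by (intro member_le_sum) (auto simp: inP)
    thus ?thesis using m_relint[OF i0] sum_tt[of m] by simp
  qed
  define \<nu> where "\<nu> i = norm (vr (v i))" for i
  define V where "V = (\<Sum>i\<in>I. \<nu> i)"
  define C3 where "C3 = (\<Sum>i\<in>I. 2 * \<nu> i^2 * R / tt i m) + V / (2 * AA)"
  define \<eta> where "\<eta> = \<kappa> / (16 * AA)"
  have C3: "C3 \<ge> 0" unfolding C3_def V_def \<nu>_def
  proof (intro add_nonneg_nonneg sum_nonneg divide_nonneg_pos)
    fix i assume "i \<in> I" thus "0 < tt i m" using m_relint by blast
  qed (use R AA in auto)
  have eta: "\<eta> > 0" using kap AA by (simp add: \<eta>_def)
  have E2: "eventually (\<lambda>k. \<forall>i\<in>I. real k * tt i m \<ge> 2 * (\<nu> i * R + 1)) sequentially"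
  proof (rule eventually_ball_finite[OF I_fin], intro ballI)
    fix i assume i: "i \<in> I"
    have t: "tt i m > 0" using m_relint[OF i] .
    show "eventually (\<lambda>k. real k * tt i m \<ge> 2 * (\<nu> i * R + 1)) sequentially"
      using ev_real_ge[of "2 * (\<nu> i * R + 1) / tt i m"]
    proof eventually_elim
      case (elim k) thus ?case using t by (simp add: pos_divide_le_eq)
    qed
  qed
  have E3: "eventually (\<lambda>k. real k powr (c + 1/2) \<ge> max (2 * R) (8 * C3 * AA / \<kappa>)) sequentially"
    using c by (intro ev_large) auto
  have "eventually (\<lambda>k. \<forall>z0\<in>Z k. \<forall>z\<in>Z k. norm (vr z0 - real k *\<^sub>R m) \<le> R \<longrightarrow>
     norm (xz k z) \<ge> real k powr c \<longrightarrow> ln (wt r v a k z) - ln (wt r v a k z0) \<le> - \<eta> * real k powr (2*c)) sequentially"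
    using eventually_gt_at_top[of 0] E2 E3
  proof eventually_elim
    case (elim k)
    hence k: "k > 0" and big: "\<forall>i\<in>I. real k * tt i m \<ge> 2 * (\<nu> i * R + 1)" by auto
    define sk where "sk = sqrt (real k) * real k powr c"
    have sk: "sk \<ge> 2 * R" "sk \<ge> 8 * C3 * AA / \<kappa>" using elim sk_pow[OF k, of c] by (auto simp: sk_def)
    show ?case
    proof (intro ballI impI)
      fix z0 z assume z0: "z0 \<in> Z k" and z: "z \<in> Z k" and Rz0: "norm (vr z0 - real k *\<^sub>R m) \<le> R"
        and far: "norm (xz k z) \<ge> real k powr c"
      define w where "w = vr z - vr z0"
      define nw where "nw = norm w"
      define s where "s i = inner (vr (v i)) w" for i
      have wL: "w \<in> L"
      proof -
        have "vr z - real k *\<^sub>R m \<in> L" "vr z0 - real k *\<^sub>R m \<in> L" using Z_L[OF k] z z0 by auto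
        hence d: "(vr z - real k *\<^sub>R m) - (vr z0 - real k *\<^sub>R m) \<in> L" using subspace_diff[OF L_subspace] by blast
        have "(vr z - real k *\<^sub>R m) - (vr z0 - real k *\<^sub>R m) = w" by (simp add: w_def)
        thus ?thesis using d by simp
      qed
      have nz: "norm (vr z - real k *\<^sub>R m) \<ge> sk"
      proof -
        have "norm (vr z - real k *\<^sub>R m) = sqrt (real k) * norm (xz k z)" using vr_xz[OF k, of z] by simp
        also have "\<dots> \<ge> sk" unfolding sk_def using far by (intro mult_left_mono) auto
        finally show ?thesis .
      qed
      have "w = (vr z - real k *\<^sub>R m) - (vr z0 - real k *\<^sub>R m)" by (simp add: w_def)
      hence "nw \<ge> norm (vr z - real k *\<^sub>R m) - norm (vr z0 - real k *\<^sub>R m)" unfolding nw_def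
        by (metis norm_triangle_ineq2)
      hence nw: "nw \<ge> sk / 2" using nz Rz0 sk(1) by linarith
      have nw0: "nw \<ge> 0" by (simp add: nw_def)
      have ti: "ln (fact (nat (TT k i z))) - ln (fact (nat (TT k i z0)))
          \<ge> s i * ln (real k * tt i m) - \<bar>s i\<bar> * (2 * \<nu> i * R / (real k * tt i m))
             + ((s i)^2 - \<bar>s i\<bar>) / (2 * (real k * AA))" if "i \<in> I" for i
        unfolding s_def w_def \<nu>_def using tail_i[OF k that z z0 Rz0] big that by (auto simp: \<nu>_def)
      have S: "(\<Sum>i\<in>I. ln (fact (nat (TT k i z))) - ln (fact (nat (TT k i z0))))
          \<ge> (\<Sum>i\<in>I. s i * ln (real k * tt i m)) - (\<Sum>i\<in>I. \<bar>s i\<bar> * (2 * \<nu> i * R / (real k * tt i m)))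
             + ((\<Sum>i\<in>I. (s i)^2) - (\<Sum>i\<in>I. \<bar>s i\<bar>)) / (2 * (real k * AA))"
      proof -
        have "(\<Sum>i\<in>I. ln (fact (nat (TT k i z))) - ln (fact (nat (TT k i z0))))
          \<ge> (\<Sum>i\<in>I. s i * ln (real k * tt i m) - \<bar>s i\<bar> * (2 * \<nu> i * R / (real k * tt i m))
             + ((s i)^2 - \<bar>s i\<bar>) / (2 * (real k * AA)))"
          by (intro sum_mono ti)
        also have "(\<Sum>i\<in>I. s i * ln (real k * tt i m) - \<bar>s i\<bar> * (2 * \<nu> i * R / (real k * tt i m))
             + ((s i)^2 - \<bar>s i\<bar>) / (2 * (real k * AA)))
           = (\<Sum>i\<in>I. s i * ln (real k * tt i m)) - (\<Sum>i\<in>I. \<bar>s i\<bar> * (2 * \<nu> i * R / (real k * tt i m)))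
             + ((\<Sum>i\<in>I. (s i)^2) - (\<Sum>i\<in>I. \<bar>s i\<bar>)) / (2 * (real k * AA))"
          by (simp add: sum.distrib sum_subtractf sum_divide_distrib diff_divide_distrib)
        finally show ?thesis .
      qed
      have lin0: "(\<Sum>i\<in>I. s i * ln (real k * tt i m)) = 0"
      proof -
        have "(\<Sum>i\<in>I. s i * ln (real k * tt i m)) = (\<Sum>i\<in>I. s i * ln (real k) + s i * ln (tt i m))"
        proof (rule sum.cong[OF refl])
          fix i assume i: "i \<in> I"
          have "tt i m > 0" using m_relint[OF i] .
          thus "s i * ln (real k * tt i m) = s i * ln (real k) + s i * ln (tt i m)"
            using k by (simp add: ln_mult distrib_left)
        qed
        also have "\<dots> = (\<Sum>i\<in>I. s i) * ln (real k) + (\<Sum>i\<in>I. s i * ln (tt i m))"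
          by (simp add: sum.distrib sum_distrib_right)
        also have "\<dots> = 0" using sumI_inner[OF wL] foc[OF wL] by (simp add: s_def)
        finally show ?thesis .
      qed
      have sabs: "\<bar>s i\<bar> \<le> \<nu> i * nw" for i unfolding s_def \<nu>_def nw_def by (rule abs_inner_le)
      have T1: "(\<Sum>i\<in>I. \<bar>s i\<bar> * (2 * \<nu> i * R / (real k * tt i m))) \<le> nw / real k * (\<Sum>i\<in>I. 2 * \<nu> i^2 * R / tt i m)"
      proof -
        have "(\<Sum>i\<in>I. \<bar>s i\<bar> * (2 * \<nu> i * R / (real k * tt i m))) \<le> (\<Sum>i\<in>I. (\<nu> i * nw) * (2 * \<nu> i * R / (real k * tt i m)))"
        proof (intro sum_mono mult_right_mono sabs)
          fix i assume i: "i \<in> I"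
          have "tt i m > 0" using m_relint[OF i] .
          thus "0 \<le> 2 * \<nu> i * R / (real k * tt i m)" using R by (simp add: \<nu>_def)
        qed
        also have "\<dots> = nw / real k * (\<Sum>i\<in>I. 2 * \<nu> i^2 * R / tt i m)"
          unfolding sum_distrib_left by (intro sum.cong) (auto simp: power2_eq_square)
        finally show ?thesis .
      qed
      have T2: "(\<Sum>i\<in>I. \<bar>s i\<bar>) \<le> V * nw"
        unfolding V_def sum_distrib_right by (intro sum_mono sabs)
      have T3: "(\<Sum>i\<in>I. (s i)^2) \<ge> \<kappa> * nw^2"
        using kap wL by (simp add: QQ_def s_def nw_def)
      have kA: "2 * (real k * AA) > 0" using k AA by simp
      have lw: "ln (wt r v a k z) - ln (wt r v a k z0) = - (\<Sum>i\<in>I. ln (fact (nat (TT k i z))) - ln (fact (nat (TT k i z0))))"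
        using wt_ln[OF k z] wt_ln[OF k z0] by (simp add: sum_subtractf)
      have step1: "ln (wt r v a k z) - ln (wt r v a k z0) \<le> nw / real k * C3 - \<kappa> * nw^2 / (2 * (real k * AA))"
      proof -
        have q: "((\<Sum>i\<in>I. (s i)^2) - (\<Sum>i\<in>I. \<bar>s i\<bar>)) / (2 * (real k * AA)) \<ge> (\<kappa> * nw^2 - V * nw) / (2 * (real k * AA))"
          using T2 T3 kA by (intro divide_right_mono) auto
        have "nw / real k * C3 = nw / real k * (\<Sum>i\<in>I. 2 * \<nu> i^2 * R / tt i m) + V * nw / (2 * (real k * AA))"
          using k AA by (simp add: C3_def field_simps)
        moreover have "(\<kappa> * nw^2 - V * nw) / (2 * (real k * AA)) = \<kappa> * nw^2 / (2 * (real k * AA)) - V * nw / (2 * (real k * AA))"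
          by (simp add: diff_divide_distrib)
        ultimately show ?thesis using lw S lin0 T1 q by linarith
      qed
      have step2: "nw / real k * C3 \<le> \<kappa> * nw^2 / (4 * (real k * AA))"
      proof -
        have "C3 \<le> \<kappa> * nw / (4 * AA)"
        proof -
          have "8 * C3 * AA / \<kappa> \<le> 2 * nw" using sk(2) nw by linarith
          hence "8 * C3 * AA \<le> 2 * nw * \<kappa>" using kap by (simp add: pos_divide_le_eq)
          thus ?thesis using AA by (simp add: pos_le_divide_eq algebra_simps)
        qed
        hence "nw / real k * C3 \<le> nw / real k * (\<kappa> * nw / (4 * AA))"
          using nw0 k by (intro mult_left_mono) auto
        also have "\<dots> = \<kappa> * nw^2 / (4 * (real k * AA))" by (simp add: power2_eq_square algebra_simps)
        finally show ?thesis .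
      qed
      have step3: "\<kappa> * nw^2 / (4 * (real k * AA)) \<ge> \<kappa> * (sk/2)^2 / (4 * (real k * AA))"
      proof -
        have "(sk/2)^2 \<le> nw^2" using nw sk(1) R by (intro power_mono) auto
        thus ?thesis using kap k AA by (intro divide_right_mono mult_left_mono) auto
      qed
      have step4: "\<kappa> * (sk/2)^2 / (4 * (real k * AA)) = \<eta> * real k powr (2*c)"
        using sk_sq[OF k, of c] k AA by (simp add: sk_def \<eta>_def power_divide field_simps)
      have "\<kappa> * nw^2 / (2 * (real k * AA)) = 2 * (\<kappa> * nw^2 / (4 * (real k * AA)))" by simp
      thus "ln (wt r v a k z) - ln (wt r v a k z0) \<le> - \<eta> * real k powr (2*c)"
        using step1 step2 step3 step4 by linarith
    qed
  qed
  thus ?thesis using eta by blast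
qed

end

lemma exp_neg_le_inv: "(y::real) > 0 \<Longrightarrow> exp (- y) \<le> 1 / y"
proof -
  assume y: "y > 0"
  have "y \<le> exp y" using exp_ge_add_one_self[of y] by linarith
  hence "1 / exp y \<le> 1 / y" using y by (intro divide_left_mono) auto
  thus ?thesis by (simp add: exp_minus field_simps)
qed

lemma abs_one_minus_exp: "\<bar>1 - exp (- (t::real))\<bar> \<le> exp \<bar>t\<bar> - 1"
proof (cases "t \<ge> 0")
  case True
  have "exp (- t) \<ge> 1 - t" using exp_ge_add_one_self[of "-t"] by simp
  moreover have "exp (- t) \<le> 1" using True by simp
  moreover have "t \<le> exp t - 1" using exp_ge_add_one_self[of t] by linarith
  ultimately show ?thesis using True by simp
next
  case False
  have "exp (- t) \<ge> 1" using False by simp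
  thus ?thesis using False by simp
qed

lemma ratio_bound:
  assumes w: "(w::real) > 0" and q: "q > 0" and b: "\<bar>ln w - ln q\<bar> \<le> e"
  shows "\<bar>w - q\<bar> \<le> w * (exp e - 1)"
proof -
  define t where "t = ln w - ln q"
  have "q = w * exp (- t)" using w q by (simp add: t_def exp_diff)
  moreover have "w - w * exp (- t) = w * (1 - exp (- t))" by (simp add: algebra_simps)
  ultimately have "\<bar>w - q\<bar> = w * \<bar>1 - exp (- t)\<bar>" using w by (simp add: abs_mult)
  also have "\<dots> \<le> w * (exp \<bar>t\<bar> - 1)" using w abs_one_minus_exp by (intro mult_left_mono) auto
  also have "\<dots> \<le> w * (exp e - 1)" using w b by (intro mult_left_mono) (auto simp: t_def)
  finally show ?thesis .
qed

lemma poly_exp_lim: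
  fixes \<alpha> \<eta> c :: real and n :: nat
  assumes eta: "\<eta> > 0" and c: "c > 0" and B: "B \<ge> 0"
  shows "((\<lambda>k. (2 * real k * B + 3) ^ n * exp (- \<eta> * real k powr (2 * c))) \<longlongrightarrow> 0) sequentially"
proof -
  define \<alpha> where "\<alpha> = real n * (2 * B + 3) powr c / c"
  have ev: "eventually (\<lambda>k. (2 * real k * B + 3) ^ n * exp (- \<eta> * real k powr (2 * c)) \<le> real k powr (- c)) sequentially"
    using eventually_gt_at_top[of 0] ev_large[OF c, of "(\<alpha> + 1) / \<eta>"]
  proof eventually_elim
    case (elim k)
    define y where "y = real k powr c"
    have k1: "real k \<ge> 1" using elim by simp
    have y: "y > 0" using elim by (simp add: y_def)
    have yb: "\<eta> * y \<ge> \<alpha> + 1" using elim eta by (simp add: y_def pos_divide_le_eq mult.commute)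
    have x1: "2 * real k * B + 3 \<ge> 1" using B by simp
    have "ln (2 * real k * B + 3) \<le> (2 * real k * B + 3) powr c / c" by (rule ln_powr_bound[OF x1 c])
    also have "\<dots> \<le> ((2 * B + 3) * real k) powr c / c"
      using c B k1 by (intro divide_right_mono powr_mono2) (auto simp: algebra_simps mult_right_mono)
    also have "\<dots> = (2 * B + 3) powr c * y / c" using B by (simp add: powr_mult y_def)
    finally have lnb: "real n * ln (2 * real k * B + 3) \<le> \<alpha> * y"
      by (simp add: \<alpha>_def mult_left_mono) (metis (no_types, lifting) mult_left_mono of_nat_0_le_iff times_divide_eq_right mult.assoc)
    have p2: "real k powr (2 * c) = y * y" by (simp add: y_def powr_add[symmetric])
    have "(2 * real k * B + 3) ^ n * exp (- \<eta> * real k powr (2 * c))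
        = exp (real n * ln (2 * real k * B + 3) - \<eta> * (y * y))"
      using x1 by (simp add: exp_diff exp_of_nat_mult p2 divide_inverse exp_minus)
    also have "\<dots> \<le> exp (- y)"
    proof -
      have "\<eta> * (y * y) \<ge> (\<alpha> + 1) * y" using yb y by (simp add: mult.assoc[symmetric] mult_right_mono)
      moreover have "(\<alpha> + 1) * y = \<alpha> * y + y" by (simp add: algebra_simps)
      ultimately show ?thesis using lnb by simp
    qed
    also have "\<dots> \<le> 1 / y" by (rule exp_neg_le_inv[OF y])
    also have "\<dots> = real k powr (- c)" by (simp add: y_def powr_minus divide_inverse)
    finally show ?case .
  qed
  have lim: "((\<lambda>k. real k powr (- c)) \<longlongrightarrow> 0) sequentially"
    using c by (intro tendsto_neg_powr filterlim_real_sequentially) auto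
  show ?thesis
    by (rule tendsto_sandwich[OF _ ev tendsto_const lim]) (use B in \<open>auto intro!: always_eventually\<close>)
qed

context lsetup begin

lemma card_exp_lim: assumes eta: "\<eta> > 0" and c: "c > 0"
  shows "((\<lambda>k. real (card (Z k)) * exp (- \<eta> * real k powr (2 * c))) \<longlongrightarrow> 0) sequentially"
proof -
  obtain B where B: "B \<ge> 0" "\<forall>y\<in>P. norm y \<le> B" using P_box by auto
  have ev: "eventually (\<lambda>k. real (card (Z k)) * exp (- \<eta> * real k powr (2 * c))
      \<le> (2 * real k * B + 3) ^ CARD('n) * exp (- \<eta> * real k powr (2 * c))) sequentially"
    using eventually_gt_at_top[of 0]
  proof eventually_elim
    case (elim k)
    define M where "M = nat \<lceil>real k * B\<rceil>"
    have "card (Z k) \<le> card (ibox M :: (int ^ 'n) set)"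
      using Z_box[OF B(2) B(1) elim] ibox_finite by (intro card_mono) (auto simp: M_def)
    also have "\<dots> \<le> (2 * M + 1) ^ CARD('n)" by (rule ibox_card)
    finally have "real (card (Z k)) \<le> real ((2 * M + 1) ^ CARD('n))" by (simp only: of_nat_le_iff)
    also have "\<dots> = (2 * real M + 1) ^ CARD('n)" by (simp add: add.commute)
    also have "\<dots> \<le> (2 * real k * B + 3) ^ CARD('n)"
    proof (rule power_mono)
      have "real M \<le> real k * B + 1" unfolding M_def using B by (simp add: of_nat_nat)
      thus "2 * real M + 1 \<le> 2 * real k * B + 3" by simp
    qed simp
    finally show ?case by (intro mult_right_mono) auto
  qed
  show ?thesis
    by (rule tendsto_sandwich[OF _ ev tendsto_const poly_exp_lim[OF eta c B(1)]])
       (auto intro!: always_eventually)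
qed

lemma bound_k:
  fixes f :: "real ^ 'n \<Rightarrow> real"
  assumes k: "k > 0" and SZ: "Sp c k \<subseteq> Z k" and zz: "zz \<in> Z k" "zz \<in> Sp c k"
    and ME: "\<forall>z\<in>Sp c k. \<bar>ln (wt r v a k z) - ln (wt r v a k zz) - (ln (gauss_wt r v a (xz k z)) - ln (gauss_wt r v a (xz k zz)))\<bar> \<le> \<epsilon>"
    and TL: "\<forall>z\<in>Z k. norm (xz k z) \<ge> real k powr c \<longrightarrow> ln (wt r v a k z) - ln (wt r v a k zz) \<le> - \<eta> * real k powr (2*c)"
    and Bf: "\<forall>x. \<bar>f x\<bar> \<le> Bf"
    and d: "d k = (\<Sum>z\<in>Z k. wt r v a k z) * gauss_wt r v a (xz k zz) / wt r v a k zz"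
  shows "\<bar>nu_int r v a k f - rho_int r v a c d k f\<bar>
     \<le> Bf * ((exp \<epsilon> - 1) + real (card (Z k)) * exp (- \<eta> * real k powr (2 * c)))"
proof -
  define w where "w z = wt r v a k z" for z
  define g where "g x = gauss_wt r v a x" for x
  define W where "W = (\<Sum>z\<in>Z k. w z)"
  define S where "S = Sp c k"
  define q where "q z = w zz * g (xz k z) / g (xz k zz)" for z
  define E where "E = exp (- \<eta> * real k powr (2 * c))"
  have wpos: "w z > 0" if "z \<in> Z k" for z using wt_ln(1)[OF k that] by (simp add: w_def)
  have gpos: "g x > 0" for x by (simp add: g_def gauss_wt_def)
  have fin: "finite (Z k)" by (rule Z_finite)
  have finS: "finite S" using SZ fin finite_subset by (auto simp: S_def)
  have W0: "w zz \<le> W" unfolding W_def using zz fin wpos by (intro member_le_sum) (auto intro: less_imp_le)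
  have Wpos: "W > 0" using W0 wpos[OF zz(1)] by simp
  have Bf0: "Bf \<ge> 0" using Bf[rule_format, of 0] by linarith
  have nu: "nu_int r v a k f = (\<Sum>z\<in>Z k. w z * f (xz k z)) / W"
    by (simp add: nu_int_def w_def W_def xz_def)
  have rho: "rho_int r v a c d k f = (\<Sum>z\<in>S. q z * f (xz k z)) / W"
  proof -
    have "rho_int r v a c d k f = (1 / d k) * (\<Sum>z\<in>S. g (xz k z) * f (xz k z))"
      unfolding rho_int_def rho_supp_eq[OF k] S_def g_def
      by (subst sum.reindex[OF xz_inj[OF k]]) simp
    also have "\<dots> = (\<Sum>z\<in>S. q z * f (xz k z)) / W"
      unfolding d q_def sum_divide_distrib sum_distrib_left
      using Wpos gpos wpos[OF zz(1)] by (intro sum.cong) (auto simp: w_def g_def W_def field_simps)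
    finally show ?thesis .
  qed
  have split: "(\<Sum>z\<in>Z k. w z * f (xz k z)) = (\<Sum>z\<in>Z k - S. w z * f (xz k z)) + (\<Sum>z\<in>S. w z * f (xz k z))"
    by (rule sum.subset_diff) (use SZ fin in \<open>auto simp: S_def\<close>)
  have diff: "nu_int r v a k f - rho_int r v a c d k f
      = ((\<Sum>z\<in>Z k - S. w z * f (xz k z)) + (\<Sum>z\<in>S. (w z - q z) * f (xz k z))) / W"
    unfolding nu rho split using Wpos by (simp add: sum_subtractf left_diff_distrib field_simps)
  have A1: "\<bar>\<Sum>z\<in>Z k - S. w z * f (xz k z)\<bar> \<le> Bf * (real (card (Z k)) * (W * E))"
  proof -
    have "\<bar>\<Sum>z\<in>Z k - S. w z * f (xz k z)\<bar> \<le> (\<Sum>z\<in>Z k - S. \<bar>w z * f (xz k z)\<bar>)" by (rule sum_abs)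
    also have "\<dots> \<le> (\<Sum>z\<in>Z k - S. (W * E) * Bf)"
    proof (rule sum_mono)
      fix z assume z: "z \<in> Z k - S"
      have zZ: "z \<in> Z k" using z by simp
      have "xz k z \<in> L" using xz_L[OF k zZ] .
      hence far: "norm (xz k z) \<ge> real k powr c" using z by (auto simp: S_def Sp_def)
      have "ln (w z) - ln (w zz) \<le> - \<eta> * real k powr (2*c)" using TL zZ far by (simp add: w_def)
      hence "ln (w z) \<le> ln (w zz) + ln E" by (simp add: E_def)
      also have "\<dots> = ln (w zz * E)" using wpos[OF zz(1)] by (simp add: E_def ln_mult)
      finally have "w z \<le> w zz * E" using wpos[OF zZ] wpos[OF zz(1)] by (simp add: E_def)
      also have "\<dots> \<le> W * E" using W0 by (simp add: E_def)
      finally have wz: "w z \<le> W * E" .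
      show "\<bar>w z * f (xz k z)\<bar> \<le> (W * E) * Bf"
        unfolding abs_mult using wpos[OF zZ] wz Bf by (intro mult_mono) (auto simp: E_def)
    qed
    also have "\<dots> = real (card (Z k - S)) * (W * E) * Bf" by simp
    also have "\<dots> \<le> real (card (Z k)) * (W * E) * Bf"
      using Wpos Bf0 fin by (intro mult_right_mono card_mono) (auto simp: E_def card_mono)
    finally show ?thesis by (simp add: algebra_simps)
  qed
  have A2: "\<bar>\<Sum>z\<in>S. (w z - q z) * f (xz k z)\<bar> \<le> Bf * (W * (exp \<epsilon> - 1))"
  proof -
    have "\<bar>\<Sum>z\<in>S. (w z - q z) * f (xz k z)\<bar> \<le> (\<Sum>z\<in>S. \<bar>(w z - q z) * f (xz k z)\<bar>)" by (rule sum_abs)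
    also have "\<dots> \<le> (\<Sum>z\<in>S. (w z * (exp \<epsilon> - 1)) * Bf)"
    proof (rule sum_mono)
      fix z assume z: "z \<in> S"
      have zZ: "z \<in> Z k" using z SZ by (auto simp: S_def)
      have qpos: "q z > 0" unfolding q_def using wpos[OF zz(1)] gpos by simp
      have lnq: "ln (q z) = ln (w zz) + ln (g (xz k z)) - ln (g (xz k zz))"
        unfolding q_def using wpos[OF zz(1)] gpos[of "xz k z"] gpos[of "xz k zz"] by (simp add: ln_mult ln_div)
      have mz: "\<bar>ln (w z) - ln (w zz) - (ln (g (xz k z)) - ln (g (xz k zz)))\<bar> \<le> \<epsilon>"
        using ME z unfolding S_def w_def g_def by blast
      have "ln (w z) - ln (q z) = ln (w z) - ln (w zz) - (ln (g (xz k z)) - ln (g (xz k zz)))"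
        using lnq by simp
      hence "\<bar>ln (w z) - ln (q z)\<bar> \<le> \<epsilon>" using mz by simp
      hence "\<bar>w z - q z\<bar> \<le> w z * (exp \<epsilon> - 1)" by (rule ratio_bound[OF wpos[OF zZ] qpos])
      thus "\<bar>(w z - q z) * f (xz k z)\<bar> \<le> (w z * (exp \<epsilon> - 1)) * Bf"
        unfolding abs_mult using Bf by (intro mult_mono) auto
    qed
    also have "\<dots> = (\<Sum>z\<in>S. w z) * (exp \<epsilon> - 1) * Bf" by (simp add: sum_distrib_right)
    also have "\<dots> \<le> W * (exp \<epsilon> - 1) * Bf"
    proof -
      have e0: "exp \<epsilon> - 1 \<ge> 0"
      proof -
        obtain z where "z \<in> S" using zz by (auto simp: S_def)
        hence "\<epsilon> \<ge> 0" using ME by (auto simp: S_def)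
        thus ?thesis by simp
      qed
      have "(\<Sum>z\<in>S. w z) \<le> W" unfolding W_def
        by (rule sum_mono2[OF fin]) (use SZ wpos in \<open>auto simp: S_def intro: less_imp_le\<close>)
      thus ?thesis using e0 Bf0 by (intro mult_right_mono) auto
    qed
    finally show ?thesis by (simp add: algebra_simps)
  qed
  have "\<bar>nu_int r v a k f - rho_int r v a c d k f\<bar>
      \<le> (Bf * (real (card (Z k)) * (W * E)) + Bf * (W * (exp \<epsilon> - 1))) / W"
  proof -
    have t: "\<bar>(\<Sum>z\<in>Z k - S. w z * f (xz k z)) + (\<Sum>z\<in>S. (w z - q z) * f (xz k z))\<bar>
        \<le> Bf * (real (card (Z k)) * (W * E)) + Bf * (W * (exp \<epsilon> - 1))"
      using A1 A2 abs_triangle_ineq[of "\<Sum>z\<in>Z k - S. w z * f (xz k z)" "\<Sum>z\<in>S. (w z - q z) * f (xz k z)"]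
      by linarith
    show ?thesis unfolding diff abs_divide using Wpos t by (simp add: divide_right_mono)
  qed
  also have "\<dots> = Bf * ((exp \<epsilon> - 1) + real (card (Z k)) * E)" using Wpos by (simp add: field_simps)
  finally show ?thesis by (simp add: E_def)
qed


lemma eps_lim: assumes "c < 1/6"
  shows "((\<lambda>k. exp (Cme * (real k powr (c - 1/2) + real k powr (3*c - 1/2))) - 1) \<longlongrightarrow> 0) sequentially"
proof -
  have l1: "((\<lambda>k. real k powr (c - 1/2)) \<longlongrightarrow> 0) sequentially"
    using assms by (intro tendsto_neg_powr filterlim_real_sequentially) auto
  have l2: "((\<lambda>k. real k powr (3*c - 1/2)) \<longlongrightarrow> 0) sequentially"
    using assms by (intro tendsto_neg_powr filterlim_real_sequentially) auto
  have "((\<lambda>k. Cme * (real k powr (c - 1/2) + real k powr (3*c - 1/2))) \<longlongrightarrow> Cme * (0 + 0)) sequentially"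
    by (intro tendsto_mult tendsto_const tendsto_add l1 l2)
  hence "((\<lambda>k. exp (Cme * (real k powr (c - 1/2) + real k powr (3*c - 1/2))) - 1) \<longlongrightarrow> exp (Cme * (0 + 0)) - 1) sequentially"
    by (intro tendsto_diff tendsto_exp tendsto_const)
  thus ?thesis by simp
qed

theorem loc_main:
  assumes c: "0 < c" "c < 1/6"
  shows "\<exists>d :: nat \<Rightarrow> real. (\<forall>k. d k > 0) \<and>
           (\<forall>f :: real ^ 'n \<Rightarrow> real. continuous_on UNIV f \<and> bounded (range f) \<longrightarrow>
              (\<lambda>k. nu_int r v a k f - rho_int r v a c d k f) \<longlonglongrightarrow> 0)"
proof -
  have c2: "c < 1/2" using c by simp
  have ch: "0 < c + 1/2" using c by simp
  obtain R where R: "R \<ge> 0" "\<forall>u\<in>L. \<exists>l::int^'n. vr l \<in> L \<and> norm (u - vr l) \<le> R" using covering by auto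
  obtain \<delta> where dl: "\<delta> > 0" "\<forall>u\<in>Lp. norm u \<le> \<delta> \<longrightarrow> m + u \<in> P" using near_m by auto
  obtain \<eta> where eta: "\<eta> > 0" and TL: "eventually (\<lambda>k. \<forall>z0\<in>Z k. \<forall>z\<in>Z k. norm (vr z0 - real k *\<^sub>R m) \<le> R \<longrightarrow>
     norm (xz k z) \<ge> real k powr c \<longrightarrow> ln (wt r v a k z) - ln (wt r v a k z0) \<le> - \<eta> * real k powr (2*c)) sequentially"
    using tail_est[OF c(1) c2 R(1)] by auto
  define G where "G k = {z0 \<in> Z k. norm (vr z0 - real k *\<^sub>R m) \<le> R}" for k
  define W where "W k = (\<Sum>z\<in>Z k. wt r v a k z)" for k
  define z0 where "z0 k = (SOME z. z \<in> G k)" for k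
  define d where "d k = (if k > 0 \<and> G k \<noteq> {} then W k * gauss_wt r v a (xz k (z0 k)) / wt r v a k (z0 k) else 1)" for k
  define \<epsilon> where "\<epsilon> k = Cme * (real k powr (c - 1/2) + real k powr (3*c - 1/2))" for k
  have z0G: "z0 k \<in> G k" if "G k \<noteq> {}" for k
    unfolding z0_def using that by (metis ex_in_conv someI_ex)
  have dpos: "d k > 0" for k
  proof (cases "k > 0 \<and> G k \<noteq> {}")
    case True
    hence k: "k > 0" and zZ: "z0 k \<in> Z k" using z0G G_def by auto
    have wp: "wt r v a k z > 0" if "z \<in> Z k" for z using wt_ln(1)[OF k that] .
    have "wt r v a k (z0 k) \<le> W k" unfolding W_def using zZ Z_finite wp
      by (intro member_le_sum) (auto intro: less_imp_le)
    hence "W k > 0" using wp[OF zZ] by simp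
    moreover have "gauss_wt r v a (xz k (z0 k)) > 0" by (simp add: gauss_wt_def)
    ultimately show ?thesis using True wp[OF zZ] by (simp add: d_def)
  qed (auto simp: d_def)
  have EG: "eventually (\<lambda>k. Z k \<noteq> {} \<longrightarrow> G k \<noteq> {}) sequentially"
    using eventually_gt_at_top[of 0] ev_real_ge[of "R / \<delta>"]
  proof eventually_elim
    case (elim k)
    have Rk: "R \<le> real k * \<delta>" using elim dl by (simp add: pos_divide_le_eq)
    show ?case
    proof
      assume "Z k \<noteq> {}"
      then obtain y where y: "y \<in> Z k" by auto
      define u where "u = real k *\<^sub>R m - vr y"
      have "vr y - real k *\<^sub>R m \<in> L" using Z_L elim y by blast
      hence uL: "u \<in> L" using L_subspace by (simp add: u_def subspace_neg[of L "vr y - real k *\<^sub>R m", simplified])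
      obtain l where l: "vr l \<in> L" "norm (u - vr l) \<le> R" using R(2) uL by blast
      define z where "z = y + l"
      have e: "vr z - real k *\<^sub>R m = vr l - u" by (simp add: z_def u_def vr_add)
      have wL: "vr z - real k *\<^sub>R m \<in> L" unfolding e using l(1) uL subspace_diff[OF L_subspace] by blast
      have nw: "norm (vr z - real k *\<^sub>R m) \<le> R" unfolding e using l(2) by (simp add: norm_minus_commute)
      have "z \<in> Z k" using near_Z[OF elim(1) dl wL] nw Rk by simp
      thus "G k \<noteq> {}" using nw by (auto simp: G_def)
    qed
  qed
  have EGS: "eventually (\<lambda>k. \<forall>z\<in>G k. z \<in> Sp c k) sequentially"
    using eventually_gt_at_top[of 0] ev_large[OF ch, of "R + 1"]
  proof eventually_elim
    case (elim k)
    show ?case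
    proof
      fix z assume z: "z \<in> G k"
      hence zZ: "z \<in> Z k" and nz: "norm (vr z - real k *\<^sub>R m) \<le> R" by (auto simp: G_def)
      have sq: "sqrt (real k) > 0" using elim by simp
      have "norm (vr z - real k *\<^sub>R m) = sqrt (real k) * norm (xz k z)" using vr_xz[OF elim(1), of z] by simp
      hence "sqrt (real k) * norm (xz k z) < sqrt (real k) * real k powr c"
        using nz elim sk_pow[OF elim(1), of c] by simp
      hence "norm (xz k z) < real k powr c" using sq by simp
      thus "z \<in> Sp c k" using xz_L[OF elim(1) zZ] by (simp add: Sp_def)
    qed
  qed
  have EV: "eventually (\<lambda>k. k > 0 \<and> Sp c k \<subseteq> Z k \<and> (Z k \<noteq> {} \<longrightarrow> G k \<noteq> {}) \<and> (\<forall>z\<in>G k. z \<in> Sp c k)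
      \<and> (\<forall>z\<in>Sp c k. \<forall>z0\<in>Sp c k.
     \<bar>ln (wt r v a k z) - ln (wt r v a k z0) - (ln (gauss_wt r v a (xz k z)) - ln (gauss_wt r v a (xz k z0)))\<bar>
       \<le> \<epsilon> k)
      \<and> (\<forall>z0\<in>Z k. \<forall>z\<in>Z k. norm (vr z0 - real k *\<^sub>R m) \<le> R \<longrightarrow>
     norm (xz k z) \<ge> real k powr c \<longrightarrow> ln (wt r v a k z) - ln (wt r v a k z0) \<le> - \<eta> * real k powr (2*c))) sequentially"
    using eventually_gt_at_top[of 0] Sp_sub_Z[OF c2] EG EGS main_est[OF c] TL
    unfolding \<epsilon>_def by eventually_elim blast
  show ?thesis
  proof (intro exI[of _ d] conjI allI impI)
    fix k show "d k > 0" by (rule dpos)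
  next
    fix f :: "real ^ 'n \<Rightarrow> real" assume f: "continuous_on UNIV f \<and> bounded (range f)"
    obtain Bf where Bf: "\<forall>x. \<bar>f x\<bar> \<le> Bf" using f unfolding bounded_iff by auto
    have Bf0: "Bf \<ge> 0" using Bf[rule_format, of 0] by linarith
    have ev: "eventually (\<lambda>k. norm (nu_int r v a k f - rho_int r v a c d k f)
        \<le> Bf * ((exp (\<epsilon> k) - 1) + real (card (Z k)) * exp (- \<eta> * real k powr (2 * c)))) sequentially"
      using EV
    proof eventually_elim
      case (elim k)
      hence k: "k > 0" and SZ: "Sp c k \<subseteq> Z k" by auto
      show ?case
      proof (cases "Z k = {}")
        case True
        hence S0: "Sp c k = {}" using SZ by auto
        have "nu_int r v a k f = 0" using True by (simp add: nu_int_def)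
        moreover have "rho_int r v a c d k f = 0" using S0 by (simp add: rho_int_def rho_supp_eq[OF k])
        moreover have "exp (\<epsilon> k) - 1 \<ge> 0"
        proof -
          have "\<epsilon> k \<ge> 0" unfolding \<epsilon>_def using Cme_nonneg by (intro mult_nonneg_nonneg add_nonneg_nonneg) auto
          thus ?thesis by simp
        qed
        ultimately show ?thesis using Bf0 by simp
      next
        case False
        hence Gne: "G k \<noteq> {}" using elim by blast
        have zG: "z0 k \<in> G k" by (rule z0G[OF Gne])
        hence zZ: "z0 k \<in> Z k" and zR: "norm (vr (z0 k) - real k *\<^sub>R m) \<le> R" by (auto simp: G_def)
        have zS: "z0 k \<in> Sp c k" using elim zG by blast
        have ME: "\<forall>z\<in>Sp c k. \<bar>ln (wt r v a k z) - ln (wt r v a k (z0 k)) - (ln (gauss_wt r v a (xz k z)) - ln (gauss_wt r v a (xz k (z0 k))))\<bar> \<le> \<epsilon> k"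
          using elim zS by blast
        have TLk: "\<forall>z\<in>Z k. norm (xz k z) \<ge> real k powr c \<longrightarrow> ln (wt r v a k z) - ln (wt r v a k (z0 k)) \<le> - \<eta> * real k powr (2*c)"
          using elim zZ zR by blast
        have dk: "d k = (\<Sum>z\<in>Z k. wt r v a k z) * gauss_wt r v a (xz k (z0 k)) / wt r v a k (z0 k)"
          using k Gne by (simp add: d_def W_def)
        show ?thesis using bound_k[where d=d and k=k and f=f, OF k SZ zZ zS ME TLk Bf dk] by simp
      qed
    qed
    have lim: "((\<lambda>k. Bf * ((exp (\<epsilon> k) - 1) + real (card (Z k)) * exp (- \<eta> * real k powr (2 * c)))) \<longlongrightarrow> Bf * (0 + 0)) sequentially"
      using eps_lim[OF c(2)] card_exp_lim[OF eta c(1)] unfolding \<epsilon>_def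
      by (intro tendsto_mult tendsto_const tendsto_add) auto
    show "(\<lambda>k. nu_int r v a k f - rho_int r v a c d k f) \<longlonglongrightarrow> 0"
      by (rule Lim_null_comparison[OF ev]) (use lim in simp)
  qed
qed

end

theorem mainTheorem4:
  fixes v :: "nat \<Rightarrow> int ^ 'n::finite" and a :: "nat \<Rightarrow> int" and r :: nat and c :: real
  assumes "(\<Sum>i<r. v i) = 0"
    and "compact (polyP r v a)"
    and "\<forall>i<r. \<exists>x\<in>polyP r v a. inner (vr (v i)) x + real_of_int (a i) = 0"
    and "0 < c" and "c < 1/6"
  shows "\<exists>d :: nat \<Rightarrow> real. (\<forall>k. d k > 0) \<and>
           (\<forall>f :: real ^ 'n \<Rightarrow> real. continuous_on UNIV f \<and> bounded (range f) \<longrightarrow>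
              (\<lambda>k. nu_int r v a k f - rho_int r v a c d k f) \<longlonglongrightarrow> 0)"
proof -
  interpret lsetup r v a using assms(1-3) by unfold_locales
  show ?thesis by (rule loc_main[OF assms(4,5)])
qed


end
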